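(* Let $h$ be a $1$-times weak Lefschetz O-sequence, let $n=h_1$ and $R=K[x_1,\ldots,x_n]$. Then the monomial ideal $\mathcal{W}_{1}(h)\subset R$ is strongly stable.
   Context: $K$ is an infinite field of characteristic $0$. An O-sequence is a sequence of non-negative integers that is the Hilbert function of some standard graded $K$-algebra; a finite O-sequence $h: 1=h_0,h_1,\ldots,h_s$ with $h_s\neq 0$ (and $h_d=0$ for $d>s$) has length $s$. $h$ is unimodal if $h_0<h_1<\cdots<h_k\ge h_{k+1}\ge\cdots\ge h_s$ for some $k$; then $\Delta h$ denotes the sequence $1, h_1-h_0,\ldots,h_k-h_{k-1}$. $h$ is a ($1$-times) weak Lefschetz O-sequence if it is unimodal and $\Delta h$ is an O-sequence. Monomials are ordered with $x_1>x_2>\cdots>x_n$; "rev-lex" means the degree reverse lexicographic order. For an O-sequence $g$ with $g_1=n-1$, $\mathrm{Lex}(g)\subset R'=K[x_1,\ldots,x_{n-1}]$ is the lex-segment ideal: its degree-$d$ component is spanned by the largest $\dim R'_d-g_d$ monomials of degree $d$ in lexicographic order, so $R'/\mathrm{Lex}(g)$ has Hilbert function $g$. Construction of $\mathcal{W}_1(h)$: start with $I=\mathrm{Lex}(\Delta h)R$ (the extension to $R$). While the Hilbert function of $R/I$ differs from $h$, let $d_0$ be the least degree where they differ, set $r=\dim_K(R/I)_{d_0}-h_{d_0}$ (this is positive), and replace $I$ by $I$ plus the ideal generated by the $r$ largest (in rev-lex order) monomials of degree $d_0$ not in $I$. After finitely many steps $R/I$ has Hilbert function $h$; the resulting ideal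 is $\mathcal{W}_1(h)$. A monomial ideal $I$ is strongly stable if for every monomial $M\in I$ and every variable $x_k$ dividing $M$, $(x_i/x_k)M\in I$ for all $i<k$. *)

theory Defs
  imports Main
begin

text \<open>Monomials in the variables x_1,...,x_n are exponent vectors a :: nat => nat,
  where a i is the exponent of x_(i+1); they vanish at every index i >= n.
  A monomial ideal is represented by the set of monomials it contains.\<close>

definition mons :: "nat \<Rightarrow> (nat \<Rightarrow> nat) set" where
  "mons n = {a. \<forall>i\<ge>n. a i = 0}"

definition mdeg :: "nat \<Rightarrow> (nat \<Rightarrow> nat) \<Rightarrow> nat" where
  "mdeg n a = (\<Sum>i<n. a i)"

definition mons_deg :: "nat \<Rightarrow> nat \<Rightarrow> (nat \<Rightarrow> nat) set" where
  "mons_deg n d = {a \<in> mons n. mdeg n a = d}"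

definition mdvd :: "(nat \<Rightarrow> nat) \<Rightarrow> (nat \<Rightarrow> nat) \<Rightarrow> bool" where
  "mdvd a b \<longleftrightarrow> (\<forall>i. a i \<le> b i)"

definition monomial_ideal :: "nat \<Rightarrow> (nat \<Rightarrow> nat) set \<Rightarrow> bool" where
  "monomial_ideal n I \<longleftrightarrow> I \<subseteq> mons n \<and>
     (\<forall>a\<in>I. \<forall>b\<in>mons n. mdvd a b \<longrightarrow> b \<in> I)"

definition gen_ideal :: "nat \<Rightarrow> (nat \<Rightarrow> nat) set \<Rightarrow> (nat \<Rightarrow> nat) set" where
  "gen_ideal n G = {b \<in> mons n. \<exists>a\<in>G. mdvd a b}"

definition hilb :: "nat \<Rightarrow> (nat \<Rightarrow> nat) set \<Rightarrow> nat \<Rightarrow> nat" where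
  "hilb n I d = card {a \<in> mons_deg n d. a \<notin> I}"

text \<open>O-sequence: Hilbert function of a standard graded K-algebra R/I; by passing to an
  initial ideal, I may be taken to be a monomial ideal.\<close>
definition O_sequence :: "(nat \<Rightarrow> nat) \<Rightarrow> bool" where
  "O_sequence h \<longleftrightarrow> (\<exists>n I. monomial_ideal n I \<and> (\<forall>d. h d = hilb n I d))"

definition finite_O_sequence :: "(nat \<Rightarrow> nat) \<Rightarrow> bool" where
  "finite_O_sequence h \<longleftrightarrow> O_sequence h \<and> h 0 = 1 \<and>
     (\<exists>s. h s \<noteq> 0 \<and> (\<forall>d>s. h d = 0))"

definition unimodal :: "(nat \<Rightarrow> nat) \<Rightarrow> bool" where
  "unimodal h \<longleftrightarrow> (\<exists>k. (\<forall>i<k. h i < h (Suc i)) \<and> (\<forall>i\<ge>k. h (Suc i) \<le> h i))"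

definition peak :: "(nat \<Rightarrow> nat) \<Rightarrow> nat" where
  "peak h = (LEAST k. h (Suc k) \<le> h k)"

definition Delta :: "(nat \<Rightarrow> nat) \<Rightarrow> nat \<Rightarrow> nat" where
  "Delta h d = (if d = 0 then 1 else if d \<le> peak h then h d - h (d - 1) else 0)"

definition weak_lefschetz_O_seq :: "(nat \<Rightarrow> nat) \<Rightarrow> bool" where
  "weak_lefschetz_O_seq h \<longleftrightarrow> finite_O_sequence h \<and> unimodal h \<and> O_sequence (Delta h)"

definition lex_gt :: "(nat \<Rightarrow> nat) \<Rightarrow> (nat \<Rightarrow> nat) \<Rightarrow> bool" where
  "lex_gt a b \<longleftrightarrow> (\<exists>i. (\<forall>j<i. a j = b j) \<and> a i > b i)"

definition revlex_gt :: "nat \<Rightarrow> (nat \<Rightarrow> nat) \<Rightarrow> (nat \<Rightarrow> nat) \<Rightarrow> bool" where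
  "revlex_gt n a b \<longleftrightarrow> mdeg n a > mdeg n b \<or>
     (mdeg n a = mdeg n b \<and> (\<exists>i<n. (\<forall>j. i < j \<and> j < n \<longrightarrow> a j = b j) \<and> a i < b i))"

definition lex_seg :: "nat \<Rightarrow> (nat \<Rightarrow> nat) \<Rightarrow> nat \<Rightarrow> (nat \<Rightarrow> nat) set" where
  "lex_seg m g d = {a \<in> mons_deg m d.
      card {b \<in> mons_deg m d. lex_gt b a} < card (mons_deg m d) - g d}"

definition Lex :: "nat \<Rightarrow> (nat \<Rightarrow> nat) \<Rightarrow> (nat \<Rightarrow> nat) set" where
  "Lex m g = gen_ideal m (\<Union>d. lex_seg m g d)"

definition W1_step :: "nat \<Rightarrow> (nat \<Rightarrow> nat) \<Rightarrow> (nat \<Rightarrow> nat) set \<Rightarrow> (nat \<Rightarrow> nat) set" where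
  "W1_step n h I =
    (if (\<forall>d. hilb n I d = h d) then I
     else (let d0 = (LEAST d. hilb n I d \<noteq> h d);
               r = hilb n I d0 - h d0;
               C = {a \<in> mons_deg n d0. a \<notin> I};
               new = {a \<in> C. card {b \<in> C. revlex_gt n b a} < r}
           in gen_ideal n (I \<union> new)))"

definition W1_start :: "nat \<Rightarrow> (nat \<Rightarrow> nat) \<Rightarrow> (nat \<Rightarrow> nat) set" where
  "W1_start n h = gen_ideal n (Lex (n - 1) (Delta h))"

definition W1 :: "(nat \<Rightarrow> nat) \<Rightarrow> (nat \<Rightarrow> nat) set" where
  "W1 h = (let n = h 1;
               N = (LEAST N. \<forall>d. hilb n ((W1_step n h ^^ N) (W1_start n h)) d = h d)
           in (W1_step n h ^^ N) (W1_start n h))"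

definition strongly_stable :: "nat \<Rightarrow> (nat \<Rightarrow> nat) set \<Rightarrow> bool" where
  "strongly_stable n I \<longleftrightarrow>
     (\<forall>a\<in>I. \<forall>k<n. a k > 0 \<longrightarrow> (\<forall>i<k. (a(k := a k - 1))(i := a i + 1) \<in> I))"

end

theory Submission
  imports Defs
begin

section \<open>Generic rank in a strict linear order\<close>

definition slin :: "('a \<Rightarrow> 'a \<Rightarrow> bool) \<Rightarrow> 'a set \<Rightarrow> bool" where
  "slin R C \<longleftrightarrow> finite C \<and> (\<forall>a\<in>C. \<not> R a a) \<and>
     (\<forall>a\<in>C. \<forall>b\<in>C. \<forall>c\<in>C. R a b \<longrightarrow> R b c \<longrightarrow> R a c) \<and>
     (\<forall>a\<in>C. \<forall>b\<in>C. a \<noteq> b \<longrightarrow> R a b \<or> R b a)"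

definition rnk :: "('a \<Rightarrow> 'a \<Rightarrow> bool) \<Rightarrow> 'a set \<Rightarrow> 'a \<Rightarrow> nat" where
  "rnk R C a = card {b \<in> C. R b a}"

lemma slin_fin: "slin R C \<Longrightarrow> finite C" unfolding slin_def by blast
lemma slin_irr: "slin R C \<Longrightarrow> a \<in> C \<Longrightarrow> \<not> R a a" unfolding slin_def by blast
lemma slin_trans: "slin R C \<Longrightarrow> a \<in> C \<Longrightarrow> b \<in> C \<Longrightarrow> c \<in> C \<Longrightarrow> R a b \<Longrightarrow> R b c \<Longrightarrow> R a c"
  unfolding slin_def by blast
lemma slin_tot: "slin R C \<Longrightarrow> a \<in> C \<Longrightarrow> b \<in> C \<Longrightarrow> a \<noteq> b \<Longrightarrow> R a b \<or> R b a"
  unfolding slin_def by blast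

lemma rnk_lt:
  assumes "slin R C" "a \<in> C" shows "rnk R C a < card C"
proof -
  have "\<not> R a a" using slin_irr[OF assms] .
  then have "{b \<in> C. R b a} \<subset> C" using assms(2) by blast
  then show ?thesis unfolding rnk_def using slin_fin[OF assms(1)] by (simp add: psubset_card_mono)
qed

lemma rnk_less:
  assumes "slin R C" "a \<in> C" "b \<in> C" "R b a" shows "rnk R C b < rnk R C a"
proof -
  have "{c \<in> C. R c b} \<subseteq> {c \<in> C. R c a}" using slin_trans[OF assms(1) _ assms(3,2) _ assms(4)] by blast
  moreover have "b \<in> {c \<in> C. R c a} - {c \<in> C. R c b}" using assms slin_irr[OF assms(1,3)] by blast
  ultimately have "{c \<in> C. R c b} \<subset> {c \<in> C. R c a}" by blast
  then show ?thesis unfolding rnk_def using slin_fin[OF assms(1)]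
    by (simp add: psubset_card_mono)
qed

lemma rnk_inj: assumes "slin R C" shows "inj_on (rnk R C) C"
proof (rule inj_onI)
  fix a b assume ab: "a \<in> C" "b \<in> C" "rnk R C a = rnk R C b"
  show "a = b"
  proof (rule ccontr)
    assume "a \<noteq> b"
    then have "R a b \<or> R b a" using slin_tot[OF assms] ab by blast
    then show False using rnk_less[OF assms] ab by fastforce
  qed
qed

lemma rnk_bij: assumes "slin R C" shows "bij_betw (rnk R C) C {..<card C}"
proof -
  have im: "rnk R C ` C \<subseteq> {..<card C}" using rnk_lt[OF assms] by auto
  have "card (rnk R C ` C) = card C" using card_image[OF rnk_inj[OF assms]] .
  then have "rnk R C ` C = {..<card C}"
    using im by (intro card_subset_eq) auto
  then show ?thesis using rnk_inj[OF assms] unfolding bij_betw_def by simp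
qed

lemma card_top:
  assumes "slin R C" shows "card {a \<in> C. rnk R C a < r} = min r (card C)"
proof -
  have b: "bij_betw (rnk R C) C {..<card C}" using rnk_bij[OF assms] .
  have "rnk R C ` {a \<in> C. rnk R C a < r} = {..<card C} \<inter> {..<r}"
    using b unfolding bij_betw_def by auto
  moreover have "inj_on (rnk R C) {a \<in> C. rnk R C a < r}"
    using rnk_inj[OF assms] by (rule inj_on_subset) auto
  ultimately have "card {a \<in> C. rnk R C a < r} = card ({..<card C} \<inter> {..<r})"
    by (metis card_image)
  also have "{..<card C} \<inter> {..<r} = {..<min r (card C)}" by auto
  finally show ?thesis by simp
qed

lemma top_upclosed:
  assumes "slin R C" "a \<in> C" "rnk R C a < r" "b \<in> C" "R b a" shows "rnk R C b < r"
  using rnk_less[OF assms(1,2,4,5)] assms(3) by simp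

lemma upclosed_eq_top:
  assumes "slin R C" "X \<subseteq> C" "\<forall>a\<in>X. \<forall>b\<in>C. R b a \<longrightarrow> b \<in> X"
  shows "X = {a \<in> C. rnk R C a < card X}"
proof -
  have fC: "finite C" using slin_fin[OF assms(1)] .
  have fX: "finite X" using assms(2) fC finite_subset by auto
  { fix a assume a: "a \<in> X"
    have "{b \<in> C. R b a} \<subseteq> X - {a}" using assms a slin_irr[OF assms(1)] by blast
    then have "card {b \<in> C. R b a} \<le> card (X - {a})" using fX by (intro card_mono) auto
    also have "\<dots> < card X" by (rule card_Diff1_less[OF fX a])
    finally have "rnk R C a < card X" unfolding rnk_def . }
  moreover
  { fix a assume a: "a \<in> C" "a \<notin> X"
    have "X \<subseteq> {b \<in> C. R b a}"
    proof
      fix x assume x: "x \<in> X"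
      then have "x \<noteq> a" using a by auto
      then have "R x a \<or> R a x" using slin_tot[OF assms(1)] assms(2) a x by blast
      then show "x \<in> {b \<in> C. R b a}" using assms a x by blast
    qed
    then have "card X \<le> rnk R C a" unfolding rnk_def using fC by (intro card_mono) auto }
  ultimately show ?thesis using assms(2) by force
qed

lemma mdeg_upd:
  assumes "i < n" shows "mdeg n (a(i := v)) + a i = mdeg n a + v"
proof -
  have f: "finite {..<n}" by simp
  have i: "i \<in> {..<n}" using assms by simp
  have 1: "mdeg n (a(i := v)) = (a(i:=v)) i + (\<Sum>j\<in>{..<n} - {i}. (a(i:=v)) j)"
    unfolding mdeg_def by (rule sum.remove[OF f i])
  have 2: "mdeg n a = a i + (\<Sum>j\<in>{..<n} - {i}. a j)" unfolding mdeg_def by (rule sum.remove[OF f i])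
  have 3: "(\<Sum>j\<in>{..<n} - {i}. (a(i:=v)) j) = (\<Sum>j\<in>{..<n} - {i}. a j)" by (rule sum.cong) auto
  show ?thesis using 1 2 3 by simp
qed

lemma mdeg_inc: "i < n \<Longrightarrow> mdeg n (a(i := Suc (a i))) = Suc (mdeg n a)"
  using mdeg_upd[of i n a "Suc (a i)"] by linarith

lemma mdeg_dec: "i < n \<Longrightarrow> 0 < a i \<Longrightarrow> Suc (mdeg n (a(i := a i - 1))) = mdeg n a"
  using mdeg_upd[of i n a "a i - 1"] by linarith

lemma le_mdeg: "i < n \<Longrightarrow> a i \<le> mdeg n a"
  unfolding mdeg_def by (rule member_le_sum) auto

lemma mons_upd: "a \<in> mons n \<Longrightarrow> i < n \<Longrightarrow> a(i := v) \<in> mons n"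
  unfolding mons_def by auto

lemma mons_mono: "a \<in> mons m \<Longrightarrow> m \<le> n \<Longrightarrow> a \<in> mons n"
  unfolding mons_def by auto

lemma mdeg_mono_vars:
  assumes "a \<in> mons m" "m \<le> n" shows "mdeg n a = mdeg m a"
proof -
  have "mdeg n a = (\<Sum>j\<in>{..<m} \<union> {m..<n}. a j)" unfolding mdeg_def
    using assms(2) by (intro sum.cong) auto
  also have "\<dots> = mdeg m a + (\<Sum>j\<in>{m..<n}. a j)" unfolding mdeg_def
    by (subst sum.union_disjoint) auto
  also have "(\<Sum>j\<in>{m..<n}. a j) = 0" using assms(1) unfolding mons_def by auto
  finally show ?thesis by simp
qed

lemma finite_mons_deg: "finite (mons_deg n d)"
proof -
  let ?f = "\<lambda>xs i. if i < n then xs ! i else (0::nat)"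
  have "mons_deg n d \<subseteq> ?f ` {xs. set xs \<subseteq> {..d} \<and> length xs = n}"
  proof
    fix a assume a: "a \<in> mons_deg n d"
    let ?xs = "map a [0..<n]"
    have "set ?xs \<subseteq> {..d}"
    proof
      fix x assume "x \<in> set ?xs"
      then obtain i where "i < n" "x = a i" by auto
      then show "x \<in> {..d}" using a le_mdeg[of i n a] unfolding mons_deg_def by simp
    qed
    moreover have "?f ?xs = a"
    proof
      fix i show "?f ?xs i = a i" using a unfolding mons_deg_def mons_def by (cases "i < n") auto
    qed
    ultimately show "a \<in> ?f ` {xs. set xs \<subseteq> {..d} \<and> length xs = n}"
      by (intro image_eqI[where x="?xs"]) auto
  qed
  moreover have "finite (?f ` {xs. set xs \<subseteq> {..d} \<and> length xs = n})"
    by (intro finite_imageI finite_lists_length_eq) auto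
  ultimately show ?thesis by (rule finite_subset)
qed

lemma mdvd_mdeg: "mdvd a b \<Longrightarrow> mdeg n a \<le> mdeg n b"
  unfolding mdvd_def mdeg_def by (intro sum_mono) auto

lemma mdvd_eq:
  assumes "mdvd a b" "a \<in> mons n" "b \<in> mons n" "mdeg n a = mdeg n b" shows "a = b"
proof (rule ccontr)
  assume "a \<noteq> b"
  then obtain j where j: "a j \<noteq> b j" by auto
  have jn: "j < n"
  proof (rule ccontr)
    assume "\<not> j < n" then have "a j = 0" "b j = 0" using assms(2,3) unfolding mons_def by auto
    then show False using j by simp
  qed
  have "a j < b j" using j assms(1) unfolding mdvd_def by (simp add: le_neq_implies_less)
  then have "mdeg n a < mdeg n b" unfolding mdeg_def using assms(1) jn unfolding mdvd_def
    by (intro sum_strict_mono_ex1) auto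
  then show False using assms(4) by simp
qed

lemma mdeg_zero_iff: assumes "a \<in> mons n" shows "mdeg n a = 0 \<longleftrightarrow> a = (\<lambda>_. 0)"
proof
  assume "mdeg n a = 0"
  then have "\<forall>i<n. a i = 0" unfolding mdeg_def by simp
  then show "a = (\<lambda>_. 0)"
  proof (intro ext)
    fix i show "a i = 0" using \<open>\<forall>i<n. a i = 0\<close> assms unfolding mons_def by (cases "i < n") auto
  qed
qed (simp add: mdeg_def)

section \<open>Lex order\<close>

lemma lex_irrefl: "\<not> lex_gt a a" unfolding lex_gt_def by auto

lemma lex_trans: assumes "lex_gt a b" "lex_gt b c" shows "lex_gt a c"
proof -
  obtain i where i: "\<forall>j<i. a j = b j" "a i > b i" using assms(1) unfolding lex_gt_def by auto
  obtain k where k: "\<forall>j<k. b j = c j" "b k > c k" using assms(2) unfolding lex_gt_def by auto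
  show ?thesis unfolding lex_gt_def
  proof (cases "i \<le> k")
    case True
    have "\<forall>j<i. a j = c j" using i k True by simp
    moreover have "c i < a i" using i k True by (cases "i = k") auto
    ultimately show "\<exists>i. (\<forall>j<i. a j = c j) \<and> c i < a i" by blast
  next
    case False
    have "\<forall>j<k. a j = c j" using i k False by simp
    moreover have "c k < a k" using i k False by simp
    ultimately show "\<exists>i. (\<forall>j<i. a j = c j) \<and> c i < a i" by blast
  qed
qed

lemma lex_total: assumes "a \<noteq> b" shows "lex_gt a b \<or> lex_gt b a"
proof -
  obtain j where "a j \<noteq> b j" using assms by auto
  define i where "i = (LEAST j. a j \<noteq> b j)"
  have i: "a i \<noteq> b i" unfolding i_def by (rule LeastI) fact
  have "\<forall>j<i. a j = b j" unfolding i_def using not_less_Least by blast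
  then show ?thesis using i unfolding lex_gt_def by (metis linorder_neqE_nat)
qed

lemma slin_lex: "slin lex_gt (mons_deg m d)"
  unfolding slin_def using finite_mons_deg lex_irrefl lex_trans lex_total by blast

definition LS :: "nat \<Rightarrow> nat \<Rightarrow> nat \<Rightarrow> (nat \<Rightarrow> nat) set" where
  "LS m d k = {a \<in> mons_deg m d. rnk lex_gt (mons_deg m d) a < k}"

lemma lex_seg_LS: "lex_seg m g d = LS m d (card (mons_deg m d) - g d)"
  unfolding lex_seg_def LS_def rnk_def by simp

lemma card_LS: "card (LS m d k) = min k (card (mons_deg m d))"
  unfolding LS_def by (rule card_top[OF slin_lex])

lemma LS_sub: "LS m d k \<subseteq> mons_deg m d" unfolding LS_def by auto

lemma LS_mono: "k \<le> k' \<Longrightarrow> LS m d k \<subseteq> LS m d k'" unfolding LS_def by auto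

lemma LS_up: "a \<in> LS m d k \<Longrightarrow> b \<in> mons_deg m d \<Longrightarrow> lex_gt b a \<Longrightarrow> b \<in> LS m d k"
  unfolding LS_def using top_upclosed[OF slin_lex] by blast

lemma LS_eq: "X \<subseteq> mons_deg m d \<Longrightarrow> (\<forall>a\<in>X. \<forall>b\<in>mons_deg m d. lex_gt b a \<longrightarrow> b \<in> X)
   \<Longrightarrow> X = LS m d (card X)"
  unfolding LS_def by (rule upclosed_eq_top[OF slin_lex])

lemma LS_all: "card (mons_deg m d) \<le> k \<Longrightarrow> LS m d k = mons_deg m d"
  using card_LS[of m d k] LS_sub[of m d k] finite_mons_deg
  by (metis card_subset_eq min.absorb2)


lemma mons_nz: "a \<in> mons n \<Longrightarrow> a j \<noteq> 0 \<Longrightarrow> j < n"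
  unfolding mons_def by (cases "j < n") auto

definition shad :: "nat \<Rightarrow> (nat \<Rightarrow> nat) set \<Rightarrow> (nat \<Rightarrow> nat) set" where
  "shad m A = {b. \<exists>a\<in>A. \<exists>i<m. b = a(i := Suc (a i))}"

lemma shadI: "a \<in> A \<Longrightarrow> i < m \<Longrightarrow> a(i := Suc (a i)) \<in> shad m A"
  unfolding shad_def by blast

lemma shadE: "b \<in> shad m A \<Longrightarrow> (\<And>a i. a \<in> A \<Longrightarrow> i < m \<Longrightarrow> b = a(i := Suc (a i)) \<Longrightarrow> P) \<Longrightarrow> P"
  unfolding shad_def by blast

lemma shad_mono: "A \<subseteq> B \<Longrightarrow> shad m A \<subseteq> shad m B"
  unfolding shad_def by blast

lemma shad_sub: assumes "A \<subseteq> mons_deg m d" shows "shad m A \<subseteq> mons_deg m (Suc d)"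
proof
  fix b assume "b \<in> shad m A"
  then obtain a i where a: "a \<in> A" "i < m" "b = a(i := Suc (a i))" by (rule shadE)
  have "a \<in> mons m" "mdeg m a = d" using a assms unfolding mons_deg_def by auto
  then show "b \<in> mons_deg m (Suc d)" using a mons_upd mdeg_inc unfolding mons_deg_def by auto
qed

lemma finite_shad: assumes "finite A" shows "finite (shad m A)"
proof -
  have "shad m A = (\<lambda>(a, i). a(i := Suc (a i))) ` (A \<times> {..<m})"
    unfolding shad_def by auto
  then show ?thesis using assms by simp
qed

lemma finite_sub_mons: "A \<subseteq> mons_deg m d \<Longrightarrow> finite A"
  using finite_mons_deg finite_subset by blast

lemma shad_LS_up:
  assumes b: "b \<in> shad m (LS m d k)" and b': "b' \<in> mons_deg m (Suc d)" and gt: "lex_gt b' b"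
  shows "b' \<in> shad m (LS m d k)"
proof -
  obtain a i where a: "a \<in> LS m d k" "i < m" "b = a(i := Suc (a i))" using b by (rule shadE)
  obtain q where q: "\<forall>j<q. b' j = b j" "b q < b' q" using gt unfolding lex_gt_def by auto
  have b'm: "b' \<in> mons m" "mdeg m b' = Suc d" using b' unfolding mons_deg_def by auto
  define P where "P = {j. 0 < b' j}"
  have Psub: "P \<subseteq> {..<m}"
  proof
    fix j assume "j \<in> P"
    then have "b' j \<noteq> 0" unfolding P_def by simp
    then show "j \<in> {..<m}" using mons_nz[OF b'm(1)] by simp
  qed
  then have fP: "finite P" using finite_subset by blast
  have qP: "q \<in> P" using q(2) unfolding P_def by simp
  define r where "r = Max P"
  have rP: "r \<in> P" unfolding r_def using fP qP by (intro Max_in) auto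
  have qr: "q \<le> r" unfolding r_def using fP qP by simp
  have rm: "r < m" using rP Psub by auto
  have br: "0 < b' r" using rP unfolding P_def by simp
  have above: "\<forall>j>r. b' j = 0"
  proof (intro allI impI)
    fix j assume "r < j"
    then have "j \<notin> P" using fP unfolding r_def using Max_ge not_le by blast
    then show "b' j = 0" unfolding P_def by simp
  qed
  define a' where "a' = b'(r := b' r - 1)"
  have a'm: "a' \<in> mons_deg m d"
  proof -
    have "a' \<in> mons m" unfolding a'_def by (rule mons_upd[OF b'm(1) rm])
    moreover have "Suc (mdeg m a') = mdeg m b'" unfolding a'_def by (rule mdeg_dec[of r m b', OF rm br])
    ultimately show ?thesis using b'm(2) unfolding mons_deg_def by simp
  qed
  have b'eq: "b' = a'(r := Suc (a' r))"
  proof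
    fix j show "b' j = (a'(r := Suc (a' r))) j" unfolding a'_def using br by (cases "j = r") simp_all
  qed
  have am: "a \<in> mons_deg m d" using a(1) LS_sub by blast
  have key: "a' = a \<or> lex_gt a' a"
  proof (cases "i < q")
    case True
    have "\<forall>j<i. a' j = a j"
    proof (intro allI impI)
      fix j assume j: "j < i"
      then have "j \<noteq> r" "j < q" using True qr by auto
      then show "a' j = a j" unfolding a'_def using q(1) a(3) j by simp
    qed
    moreover have "a i < a' i"
    proof -
      have "i \<noteq> r" using True qr by simp
      then have "a' i = b i" unfolding a'_def using q(1) True by simp
      then show ?thesis using a(3) by simp
    qed
    ultimately show ?thesis unfolding lex_gt_def by blast
  next
    case False
    have low: "\<forall>j<q. a' j = a j"
    proof (intro allI impI)
      fix j assume j: "j < q"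
      then have "j \<noteq> r" "j \<noteq> i" using False qr by auto
      then show "a' j = a j" unfolding a'_def using q(1) a(3) j by simp
    qed
    have bqa: "a q \<le> b q" using a(3) by simp
    show ?thesis
    proof (cases "q < r")
      case True
      then have "a' q = b' q" unfolding a'_def by simp
      then have "a q < a' q" using bqa q(2) by simp
      then show ?thesis using low unfolding lex_gt_def by blast
    next
      case qr2: False
      then have rq: "r = q" using qr by simp
      have a'q: "a' q = b' q - 1" unfolding a'_def using rq by simp
      show ?thesis
      proof (cases "a q < a' q")
        case True then show ?thesis using low unfolding lex_gt_def by blast
      next
        case False
        have iq: "i \<noteq> q"
        proof
          assume "i = q" then have "b q = Suc (a q)" using a(3) by simp
          then show False using False a'q q(2) by simp
        qed
        then have "b q = a q" using a(3) by simp
        then have eqq: "a' q = a q" using False a'q q(2) by simp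
        have "mdvd a' a" unfolding mdvd_def
        proof
          fix j show "a' j \<le> a j"
          proof (cases "j < q")
            case True then show ?thesis using low by simp
          next
            case False
            show ?thesis
            proof (cases "j = q")
              case True then show ?thesis using eqq by simp
            next
              case False
              then have "q < j" using \<open>\<not> j < q\<close> by simp
              then have "a' j = 0" unfolding a'_def using above rq by simp
              then show ?thesis by simp
            qed
          qed
        qed
        then have "a' = a" using mdvd_eq[of a' a m] a'm am unfolding mons_deg_def by simp
        then show ?thesis by simp
      qed
    qed
  qed
  have "a' \<in> LS m d k" using key a(1) LS_up[OF a(1) a'm] by blast
  then show ?thesis using b'eq shadI[OF _ rm] by metis
qed

lemma shad_LS_eq: "shad m (LS m d k) = LS m (Suc d) (card (shad m (LS m d k)))"
  by (rule LS_eq[OF shad_sub[OF LS_sub]]) (use shad_LS_up in blast)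


definition kf :: "nat \<Rightarrow> nat \<Rightarrow> (nat \<Rightarrow> nat) \<Rightarrow> (nat \<Rightarrow> nat)" where
  "kf i p a = a(i := 0, p := 0)"
definition fib :: "nat \<Rightarrow> nat \<Rightarrow> (nat \<Rightarrow> nat) set \<Rightarrow> (nat \<Rightarrow> nat) \<Rightarrow> (nat \<Rightarrow> nat) set" where
  "fib i p X c = {a \<in> X. kf i p a = c}"
definition vals :: "nat \<Rightarrow> nat \<Rightarrow> (nat \<Rightarrow> nat) set \<Rightarrow> (nat \<Rightarrow> nat) \<Rightarrow> nat set" where
  "vals i p X c = (\<lambda>a. a p) ` fib i p X c"
definition cmpr :: "nat \<Rightarrow> nat \<Rightarrow> nat \<Rightarrow> nat \<Rightarrow> (nat \<Rightarrow> nat) set \<Rightarrow> (nat \<Rightarrow> nat) set" where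
  "cmpr m d i p A = {a \<in> mons_deg m d. a p < card (fib i p A (kf i p a))}"
definition mu :: "nat \<Rightarrow> (nat \<Rightarrow> nat) set \<Rightarrow> nat" where
  "mu p X = (\<Sum>a\<in>X. a p)"

lemma card_fibs:
  assumes "finite X" "kf i p ` X \<subseteq> K" "finite K"
  shows "card X = (\<Sum>c\<in>K. card (fib i p X c))"
proof -
  have "(\<Sum>c\<in>K. sum (\<lambda>_. 1::nat) {x \<in> X. kf i p x = c}) = sum (\<lambda>_. 1) X"
    by (rule sum.group[OF assms(1,3,2)])
  then show ?thesis unfolding fib_def by simp
qed

lemma sum_fibs:
  assumes "finite X" "kf i p ` X \<subseteq> K" "finite K"
  shows "mu p X = (\<Sum>c\<in>K. mu p (fib i p X c))"
  unfolding mu_def fib_def by (rule sum.group[OF assms(1,3,2), symmetric])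

lemma kf_upd_other: "k \<noteq> i \<Longrightarrow> k \<noteq> p \<Longrightarrow> kf i p (a(k := v)) = (kf i p a)(k := v)"
  unfolding kf_def by (rule ext) simp

lemma kf_upd_i: "kf i p (a(i := v)) = kf i p a"
  unfolding kf_def by (rule ext) simp

lemma kf_upd_p: "kf i p (a(p := v)) = kf i p a"
  unfolding kf_def by (rule ext) simp

lemma kf_other: "j \<noteq> i \<Longrightarrow> j \<noteq> p \<Longrightarrow> kf i p a j = a j"
  unfolding kf_def by simp

lemma sum_initial:
  "finite V \<Longrightarrow> (\<Sum>v<card V. v) \<le> (\<Sum>v\<in>V. v) \<and> (V \<noteq> {..<card V} \<longrightarrow> (\<Sum>v<card V. v) < (\<Sum>v\<in>V. v))"
proof (induction "card V" arbitrary: V)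
  case 0 then show ?case by simp
next
  case (Suc n)
  then have ne: "V \<noteq> {}" by auto
  define M where "M = Max V"
  have MV: "M \<in> V" unfolding M_def using Suc ne by simp
  define V' where "V' = V - {M}"
  have cV': "card V' = n" unfolding V'_def using Suc MV by simp
  have fV': "finite V'" unfolding V'_def using Suc by simp
  have IH: "(\<Sum>v<n. v) \<le> (\<Sum>v\<in>V'. v) \<and> (V' \<noteq> {..<n} \<longrightarrow> (\<Sum>v<n. v) < (\<Sum>v\<in>V'. v))"
    using Suc(1)[of V'] cV' fV' by simp
  have sV: "(\<Sum>v\<in>V. v) = (\<Sum>v\<in>V'. v) + M" unfolding V'_def using Suc(3) MV
    by (simp add: sum.remove[of V M])
  have sN: "(\<Sum>v<Suc n. v) = (\<Sum>v<n. v) + n" by simp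
  have "V \<subseteq> {..M}" unfolding M_def using Suc(3) by auto
  then have "card V \<le> Suc M" using card_mono[of "{..M}" V] by simp
  then have nM: "n \<le> M" using Suc(2) by simp
  have le: "(\<Sum>v<Suc n. v) \<le> (\<Sum>v\<in>V. v)" using IH sV sN nM by linarith
  moreover have "V \<noteq> {..<card V} \<longrightarrow> (\<Sum>v<card V. v) < (\<Sum>v\<in>V. v)"
  proof
    assume neq: "V \<noteq> {..<card V}"
    show "(\<Sum>v<card V. v) < (\<Sum>v\<in>V. v)"
    proof (cases "n < M")
      case True then show ?thesis using IH sV sN Suc(2) by (metis add_le_less_mono)
    next
      case False
      then have Mn: "M = n" using nM by simp
      have "V' \<noteq> {..<n}"
      proof
        assume "V' = {..<n}"
        then have "V = insert n {..<n}" unfolding V'_def using MV Mn by auto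
        then have "V = {..<Suc n}" by auto
        then show False using neq Suc(2) by simp
      qed
      then show ?thesis using IH sV sN Mn Suc(2) by simp
    qed
  qed
  ultimately show ?case using Suc(2) by simp
qed

lemma card_union_Suc:
  assumes "finite V" "V \<noteq> {}" shows "Suc (card V) \<le> card (V \<union> Suc ` V)"
proof -
  have "Suc (Max V) \<notin> V"
  proof
    assume "Suc (Max V) \<in> V"
    then have "Suc (Max V) \<le> Max V" using Max_ge[OF assms(1)] by blast
    then show False by simp
  qed
  moreover have "Suc (Max V) \<in> Suc ` V" using assms by simp
  ultimately have "insert (Suc (Max V)) V \<subseteq> V \<union> Suc ` V" by blast
  then have "card (insert (Suc (Max V)) V) \<le> card (V \<union> Suc ` V)"
    using assms by (intro card_mono) auto
  then show ?thesis using assms \<open>Suc (Max V) \<notin> V\<close> by simp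
qed

context
  fixes m i p :: nat
  assumes ip: "i < m" "p < m" "i \<noteq> p"
begin

lemma deg_key: assumes "a \<in> mons m" shows "mdeg m a = mdeg m (kf i p a) + a i + a p"
proof -
  have 1: "mdeg m (a(i := 0)) + a i = mdeg m a" using mdeg_upd[OF ip(1), of a 0] by simp
  have 2: "mdeg m ((a(i := 0))(p := 0)) + (a(i := 0)) p = mdeg m (a(i := 0))"
    using mdeg_upd[OF ip(2), of "a(i := 0)" 0] by simp
  have 3: "(a(i := 0)) p = a p" using ip(3) by simp
  show ?thesis using 1 2 3 unfolding kf_def by simp
qed

lemma kf_mons: "a \<in> mons m \<Longrightarrow> kf i p a \<in> mons m"
  unfolding kf_def using mons_upd ip by simp

lemma fib_inj: assumes "X \<subseteq> mons_deg m e" shows "inj_on (\<lambda>a. a p) (fib i p X c)"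
proof (rule inj_onI)
  fix a b assume a: "a \<in> fib i p X c" and b: "b \<in> fib i p X c" and ab: "a p = b p"
  have am: "a \<in> mons m" "mdeg m a = e" and bm: "b \<in> mons m" "mdeg m b = e"
    using a b assms unfolding fib_def mons_deg_def by auto
  have kk: "kf i p a = kf i p b" using a b unfolding fib_def by simp
  have "a i = b i" using deg_key[OF am(1)] deg_key[OF bm(1)] am(2) bm(2) kk ab by simp
  show "a = b"
  proof
    fix j show "a j = b j"
    proof (cases "j = i \<or> j = p")
      case True then show ?thesis using \<open>a i = b i\<close> ab by auto
    next
      case False then show ?thesis using kf_other[of j i p a] kf_other[of j i p b] kk by metis
    qed
  qed
qed

lemma card_vals: "X \<subseteq> mons_deg m e \<Longrightarrow> card (vals i p X c) = card (fib i p X c)"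
  unfolding vals_def by (rule card_image[OF fib_inj])

lemma vals_bound: assumes "X \<subseteq> mons_deg m e" "v \<in> vals i p X c" shows "v + mdeg m c \<le> e"
proof -
  obtain a where a: "a \<in> X" "kf i p a = c" "v = a p" using assms(2) unfolding vals_def fib_def by auto
  have "a \<in> mons m" "mdeg m a = e" using a assms(1) unfolding mons_deg_def by auto
  then show ?thesis using deg_key[of a] a by simp
qed

lemma realize:
  assumes c: "c \<in> mons m" "c i = 0" "c p = 0" and v: "v + mdeg m c \<le> e"
  defines "x \<equiv> c(i := e - mdeg m c - v, p := v)"
  shows "x \<in> mons_deg m e" "kf i p x = c" "x p = v"
proof -
  show xp: "x p = v" unfolding x_def by simp
  show kx: "kf i p x = c" unfolding x_def kf_def
  proof
    fix j show "(c(i := e - mdeg m c - v, p := v, i := 0, p := 0)) j = c j" using c by simp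
  qed
  have xm: "x \<in> mons m" unfolding x_def using c(1) ip by (simp add: mons_upd)
  have xi: "x i = e - mdeg m c - v" unfolding x_def using ip(3) by simp
  have "mdeg m x = e" using deg_key[OF xm] kx xi xp v by simp
  then show "x \<in> mons_deg m e" using xm unfolding mons_deg_def by simp
qed

lemma cmpr_sub: "cmpr m d i p A \<subseteq> mons_deg m d" unfolding cmpr_def by auto

lemma vals_comp:
  assumes A: "A \<subseteq> mons_deg m d"
  shows "vals i p (cmpr m d i p A) c = {..<card (fib i p A c)}"
proof
  show "vals i p (cmpr m d i p A) c \<subseteq> {..<card (fib i p A c)}"
  proof
    fix v assume "v \<in> vals i p (cmpr m d i p A) c"
    then obtain x where x: "x \<in> cmpr m d i p A" "kf i p x = c" "v = x p" unfolding vals_def fib_def by blast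
    then show "v \<in> {..<card (fib i p A c)}" unfolding cmpr_def by simp
  qed
next
  show "{..<card (fib i p A c)} \<subseteq> vals i p (cmpr m d i p A) c"
  proof
    fix v assume v: "v \<in> {..<card (fib i p A c)}"
    then have "fib i p A c \<noteq> {}" by auto
    then obtain a0 where a0: "a0 \<in> A" "kf i p a0 = c" unfolding fib_def by auto
    have a0m: "a0 \<in> mons m" "mdeg m a0 = d" using a0 A unfolding mons_deg_def by auto
    have cm: "c \<in> mons m" "c i = 0" "c p = 0" using kf_mons[OF a0m(1)] a0 unfolding kf_def by auto
    have "vals i p A c \<subseteq> {..d - mdeg m c}"
    proof
      fix w assume "w \<in> vals i p A c"
      then have "w + mdeg m c \<le> d" by (rule vals_bound[OF A])
      then show "w \<in> {..d - mdeg m c}" by simp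
    qed
    then have "card (vals i p A c) \<le> card {..d - mdeg m c}" by (intro card_mono) simp_all
    then have "card (vals i p A c) \<le> Suc (d - mdeg m c)" by simp
    moreover have "mdeg m c \<le> d" using deg_key[OF a0m(1)] a0 a0m by simp
    ultimately have vb: "v + mdeg m c \<le> d" using v card_vals[OF A] by simp
    note r = realize[OF cm vb]
    let ?x = "c(i := d - mdeg m c - v, p := v)"
    have "?x \<in> cmpr m d i p A" unfolding cmpr_def using r v by simp
    then have "?x \<in> fib i p (cmpr m d i p A) c" unfolding fib_def using r by simp
    then show "v \<in> vals i p (cmpr m d i p A) c" unfolding vals_def by (rule rev_image_eqI) (use r(3) in simp)
  qed
qed

lemma card_comp:
  assumes A: "A \<subseteq> mons_deg m d" shows "card (cmpr m d i p A) = card A"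
proof -
  let ?K = "kf i p ` mons_deg m d"
  have fK: "finite ?K" using finite_mons_deg by simp
  have fA: "finite A" using A finite_sub_mons by blast
  have fC: "finite (cmpr m d i p A)" using cmpr_sub finite_sub_mons by blast
  have iC: "kf i p ` cmpr m d i p A \<subseteq> ?K" using cmpr_sub by (rule image_mono)
  have iA: "kf i p ` A \<subseteq> ?K" using A by (rule image_mono)
  have "card (cmpr m d i p A) = (\<Sum>c\<in>?K. card (fib i p (cmpr m d i p A) c))"
    by (rule card_fibs[OF fC iC fK])
  also have "\<dots> = (\<Sum>c\<in>?K. card (fib i p A c))"
  proof (rule sum.cong[OF refl])
    fix c
    have "card (fib i p (cmpr m d i p A) c) = card (vals i p (cmpr m d i p A) c)"
      using card_vals[OF cmpr_sub] by simp
    also have "\<dots> = card (fib i p A c)" using vals_comp[OF A] by simp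
    finally show "card (fib i p (cmpr m d i p A) c) = card (fib i p A c)" .
  qed
  also have "\<dots> = card A" using card_fibs[OF fA iA fK] by simp
  finally show ?thesis .
qed

lemma cmpr_fix_stab:
  assumes A: "A \<subseteq> mons_deg m d" and fx: "cmpr m d i p A = A" and a: "a \<in> A" and ap: "0 < a p"
  shows "(a(p := a p - 1))(i := Suc (a i)) \<in> A"
proof -
  let ?a' = "(a(p := a p - 1))(i := Suc (a i))"
  have am: "a \<in> mons m" "mdeg m a = d" using a A unfolding mons_deg_def by auto
  have m1: "a(p := a p - 1) \<in> mons m" using mons_upd[OF am(1) ip(2)] .
  have m2: "?a' \<in> mons m" using mons_upd[OF m1 ip(1)] .
  have d1: "Suc (mdeg m (a(p := a p - 1))) = d" using mdeg_dec[of p m a, OF ip(2) ap] am(2) by simp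
  have d2: "mdeg m ?a' = Suc (mdeg m (a(p := a p - 1)))"
    using mdeg_inc[OF ip(1), of "a(p := a p - 1)"] ip(3) by simp
  have k: "kf i p ?a' = kf i p a" by (simp add: kf_upd_i kf_upd_p)
  have "a \<in> cmpr m d i p A" using fx a by simp
  then have "a p < card (fib i p A (kf i p a))" unfolding cmpr_def by simp
  moreover have "?a' p = a p - 1" using ip(3) by simp
  ultimately have "?a' \<in> cmpr m d i p A" unfolding cmpr_def mons_deg_def using m2 d1 d2 k ap by simp
  then show ?thesis using fx by simp
qed

lemma mu_vals: assumes "X \<subseteq> mons_deg m e" shows "mu p (fib i p X c) = (\<Sum>v\<in>vals i p X c. v)"
  unfolding mu_def vals_def by (simp add: sum.reindex[OF fib_inj[OF assms]])

lemma cmpr_mu: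
  assumes A: "A \<subseteq> mons_deg m d" and ne: "cmpr m d i p A \<noteq> A"
  shows "mu p (cmpr m d i p A) < mu p A"
proof -
  let ?K = "kf i p ` mons_deg m d"
  let ?C = "cmpr m d i p A"
  have fK: "finite ?K" using finite_mons_deg by simp
  have fA: "finite A" using A finite_sub_mons by blast
  have fC: "finite ?C" using cmpr_sub finite_sub_mons by blast
  have fv: "\<And>c. finite (vals i p A c)" unfolding vals_def fib_def using fA by simp
  have iC: "kf i p ` ?C \<subseteq> ?K" using cmpr_sub by (rule image_mono)
  have iA: "kf i p ` A \<subseteq> ?K" using A by (rule image_mono)
  have eC: "mu p ?C = (\<Sum>c\<in>?K. \<Sum>v\<in>vals i p ?C c. v)"
    using sum_fibs[OF fC iC fK] mu_vals[OF cmpr_sub] by simp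
  have eA: "mu p A = (\<Sum>c\<in>?K. \<Sum>v\<in>vals i p A c. v)"
    using sum_fibs[OF fA iA fK] mu_vals[OF A] by simp
  have vC: "\<And>c. vals i p ?C c = {..<card (vals i p A c)}"
    using vals_comp[OF A] card_vals[OF A] by simp
  have le: "\<forall>c\<in>?K. (\<Sum>v\<in>vals i p ?C c. v) \<le> (\<Sum>v\<in>vals i p A c. v)"
    using vC sum_initial[OF fv] by simp
  have "\<exists>c\<in>?K. vals i p A c \<noteq> {..<card (vals i p A c)}"
  proof (rule ccontr)
    assume "\<not> ?thesis"
    then have eqv: "\<forall>c\<in>?K. vals i p A c = vals i p ?C c" using vC by simp
    have "?C = A"
    proof
      show "A \<subseteq> ?C"
      proof
        fix x assume x: "x \<in> A"
        then have xK: "kf i p x \<in> ?K" using A by blast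
        have "x p \<in> vals i p A (kf i p x)" unfolding vals_def fib_def using x by blast
        then have "x p \<in> vals i p ?C (kf i p x)" using bspec[OF eqv xK] by simp
        then obtain y where y: "y \<in> ?C" "kf i p y = kf i p x" "y p = x p"
          unfolding vals_def fib_def by auto
        have "x \<in> fib i p (mons_deg m d) (kf i p x)" "y \<in> fib i p (mons_deg m d) (kf i p x)"
          using x A y cmpr_sub unfolding fib_def by auto
        then have "x = y" using fib_inj[of "mons_deg m d" d] y(3) unfolding inj_on_def by auto
        then show "x \<in> ?C" using y by simp
      qed
    next
      show "?C \<subseteq> A"
      proof
        fix y assume y: "y \<in> ?C"
        then have yK: "kf i p y \<in> ?K" using cmpr_sub by blast
        have "y p \<in> vals i p ?C (kf i p y)" unfolding vals_def fib_def using y by blast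
        then have "y p \<in> vals i p A (kf i p y)" using bspec[OF eqv yK] by simp
        then obtain x where x: "x \<in> A" "kf i p x = kf i p y" "x p = y p"
          unfolding vals_def fib_def by auto
        have "x \<in> fib i p (mons_deg m d) (kf i p y)" "y \<in> fib i p (mons_deg m d) (kf i p y)"
          using x A y cmpr_sub unfolding fib_def by auto
        then have "x = y" using fib_inj[of "mons_deg m d" d] x(3) unfolding inj_on_def by auto
        then show "y \<in> A" using x by simp
      qed
    qed
    then show False using ne by simp
  qed
  then obtain c where c: "c \<in> ?K" "vals i p A c \<noteq> {..<card (vals i p A c)}" by blast
  have "(\<Sum>v\<in>vals i p ?C c. v) < (\<Sum>v\<in>vals i p A c. v)"
    using vC sum_initial[OF fv] c(2) by simp
  then have "(\<Sum>c\<in>?K. \<Sum>v\<in>vals i p ?C c. v) < (\<Sum>c\<in>?K. \<Sum>v\<in>vals i p A c. v)"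
    using le c(1) fK by (intro sum_strict_mono_ex1) auto
  then show ?thesis using eC eA by simp
qed

end


context
  fixes m i p :: nat
  assumes ip: "i < m" "p < m" "i \<noteq> p"
begin

lemma vals_shad_sub1: "vals i p A c \<subseteq> vals i p (shad m A) c"
proof
  fix v assume "v \<in> vals i p A c"
  then obtain x where x: "x \<in> A" "kf i p x = c" "v = x p" unfolding vals_def fib_def by blast
  let ?y = "x(i := Suc (x i))"
  have "?y \<in> shad m A" using shadI[OF x(1) ip(1)] .
  moreover have "kf i p ?y = c" using x(2) kf_upd_i by metis
  ultimately have "?y \<in> fib i p (shad m A) c" unfolding fib_def by simp
  moreover have "v = ?y p" using x(3) ip(3) by simp
  ultimately show "v \<in> vals i p (shad m A) c" unfolding vals_def by blast
qed

lemma vals_shad_sub2: "Suc ` vals i p A c \<subseteq> vals i p (shad m A) c"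
proof
  fix w assume "w \<in> Suc ` vals i p A c"
  then obtain v where v: "v \<in> vals i p A c" "w = Suc v" by blast
  then obtain x where x: "x \<in> A" "kf i p x = c" "v = x p" unfolding vals_def fib_def by blast
  let ?y = "x(p := Suc (x p))"
  have "?y \<in> shad m A" using shadI[OF x(1) ip(2)] .
  moreover have "kf i p ?y = c" using x(2) kf_upd_p by metis
  ultimately have "?y \<in> fib i p (shad m A) c" unfolding fib_def by simp
  moreover have "w = ?y p" using x(3) v(2) by simp
  ultimately show "w \<in> vals i p (shad m A) c" unfolding vals_def by blast
qed

lemma vals_shad_sub3:
  assumes k: "k < m" "k \<noteq> i" "k \<noteq> p"
  shows "vals i p A c \<subseteq> vals i p (shad m A) (c(k := Suc (c k)))"
proof
  fix v assume "v \<in> vals i p A c"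
  then obtain x where x: "x \<in> A" "kf i p x = c" "v = x p" unfolding vals_def fib_def by blast
  let ?y = "x(k := Suc (x k))"
  have "?y \<in> shad m A" using shadI[OF x(1) k(1)] .
  moreover have "kf i p ?y = c(k := Suc (c k))"
  proof -
    have "kf i p ?y = (kf i p x)(k := Suc (x k))" using kf_upd_other[OF k(2,3)] .
    moreover have "c k = x k" using x(2) kf_other[OF k(2,3), of x] by simp
    ultimately show ?thesis using x(2) by simp
  qed
  ultimately have "?y \<in> fib i p (shad m A) (c(k := Suc (c k)))" unfolding fib_def by simp
  moreover have "v = ?y p" using x(3) k(3) by simp
  ultimately show "v \<in> vals i p (shad m A) (c(k := Suc (c k)))" unfolding vals_def by blast
qed

lemma cmpr_shad:
  assumes A: "A \<subseteq> mons_deg m d"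
  shows "card (shad m (cmpr m d i p A)) \<le> card (shad m A)"
proof -
  let ?C = "cmpr m d i p A"
  let ?SA = "shad m A"
  let ?SC = "shad m ?C"
  have SA: "?SA \<subseteq> mons_deg m (Suc d)" using shad_sub[OF A] .
  have SC: "?SC \<subseteq> mons_deg m (Suc d)" using shad_sub[OF cmpr_sub[OF ip]] .
  have fSA: "finite ?SA" using SA finite_sub_mons by blast
  have fSC: "finite ?SC" using SC finite_sub_mons by blast
  let ?K = "kf i p ` mons_deg m (Suc d)"
  have fK: "finite ?K" using finite_mons_deg by simp
  have fv: "\<And>c. finite (vals i p ?SA c)" unfolding vals_def fib_def using fSA by simp
  have key: "\<And>c. vals i p ?SC c \<subseteq> {..<card (vals i p ?SA c)}"
  proof
    fix c v assume "v \<in> vals i p ?SC c"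
    then obtain b where b: "b \<in> ?SC" "kf i p b = c" "v = b p" unfolding vals_def fib_def by blast
    obtain a k where a: "a \<in> ?C" "k < m" "b = a(k := Suc (a k))" using b(1) by (rule shadE)
    have aA: "a p < card (vals i p A (kf i p a))"
      using a(1) card_vals[OF ip A] unfolding cmpr_def by simp
    have fvA: "\<And>c. finite (vals i p A c)" unfolding vals_def fib_def using A finite_sub_mons by auto
    show "v \<in> {..<card (vals i p ?SA c)}"
    proof (cases "k = i")
      case True
      then have "kf i p a = c" using b(2) a(3) kf_upd_i by metis
      moreover have "v = a p" using b(3) a(3) True ip(3) by simp
      moreover have "card (vals i p A c) \<le> card (vals i p ?SA c)"
        using vals_shad_sub1 fv by (intro card_mono) auto
      ultimately show ?thesis using aA by simp
    next
      case False
      show ?thesis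
      proof (cases "k = p")
        case True
        then have kc: "kf i p a = c" using b(2) a(3) kf_upd_p by metis
        have v: "v = Suc (a p)" using b(3) a(3) True by simp
        have ne: "vals i p A c \<noteq> {}" using aA kc by auto
        have "Suc (card (vals i p A c)) \<le> card (vals i p A c \<union> Suc ` vals i p A c)"
          using card_union_Suc[OF fvA ne] .
        also have "\<dots> \<le> card (vals i p ?SA c)"
          using vals_shad_sub1 vals_shad_sub2 fv by (intro card_mono) auto
        finally show ?thesis using aA kc v by simp
      next
        case False
        have kk: "k \<noteq> i" "k \<noteq> p" using \<open>k \<noteq> i\<close> False by auto
        have "kf i p b = (kf i p a)(k := Suc (a k))" using a(3) kf_upd_other[OF kk] by simp
        moreover have "(kf i p a) k = a k" using kf_other[OF kk] .
        ultimately have cc: "c = (kf i p a)(k := Suc ((kf i p a) k))" using b(2) by simp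
        have v: "v = a p" using b(3) a(3) kk by simp
        have "card (vals i p A (kf i p a)) \<le> card (vals i p ?SA c)"
          using vals_shad_sub3[OF a(2) kk, of A "kf i p a"] cc fv by (intro card_mono) auto
        then show ?thesis using aA v by simp
      qed
    qed
  qed
  have iC: "kf i p ` ?SC \<subseteq> ?K" using SC by (rule image_mono)
  have iA: "kf i p ` ?SA \<subseteq> ?K" using SA by (rule image_mono)
  have "card ?SC = (\<Sum>c\<in>?K. card (fib i p ?SC c))" by (rule card_fibs[OF fSC iC fK])
  also have "\<dots> = (\<Sum>c\<in>?K. card (vals i p ?SC c))" using card_vals[OF ip SC] by simp
  also have "\<dots> \<le> (\<Sum>c\<in>?K. card (vals i p ?SA c))"
  proof (rule sum_mono)
    fix c show "card (vals i p ?SC c) \<le> card (vals i p ?SA c)"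
      using card_mono[OF _ key[of c]] by simp
  qed
  also have "\<dots> = (\<Sum>c\<in>?K. card (fib i p ?SA c))" using card_vals[OF ip SA] by simp
  also have "\<dots> = card ?SA" by (rule card_fibs[OF fSA iA fK, symmetric])
  finally show ?thesis .
qed

end


definition stab :: "nat \<Rightarrow> (nat \<Rightarrow> nat) set \<Rightarrow> bool" where
  "stab p A \<longleftrightarrow> (\<forall>a\<in>A. 0 < a p \<longrightarrow> (\<forall>i<p. (a(p := a p - 1))(i := Suc (a i)) \<in> A))"
definition macq :: "nat \<Rightarrow> nat \<Rightarrow> (nat \<Rightarrow> nat) set \<Rightarrow> bool" where
  "macq m d A \<longleftrightarrow> card (shad m (LS m d (card A))) \<le> card (shad m A)"
definition pz :: "nat \<Rightarrow> (nat \<Rightarrow> nat) set \<Rightarrow> (nat \<Rightarrow> nat) set" where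
  "pz p X = {a \<in> X. a p = 0}"
definition qt :: "nat \<Rightarrow> nat \<Rightarrow> (nat \<Rightarrow> nat) set \<Rightarrow> (nat \<Rightarrow> nat) set" where
  "qt p d X = {c \<in> mons_deg (Suc p) d. c(p := Suc (c p)) \<in> X}"

lemma mdeg_Suc: "mdeg (Suc p) a = mdeg p a + a p"
  unfolding mdeg_def by simp

lemma mons_Suc_p: "a \<in> mons (Suc p) \<Longrightarrow> a p = 0 \<Longrightarrow> a \<in> mons p"
proof -
  assume a: "a \<in> mons (Suc p)" "a p = 0"
  have "\<forall>i\<ge>p. a i = 0"
  proof (intro allI impI)
    fix i assume "p \<le> i"
    then have "i = p \<or> Suc p \<le> i" by auto
    then show "a i = 0" using a unfolding mons_def by auto
  qed
  then show "a \<in> mons p" unfolding mons_def by simp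
qed

lemma mons_deg_p: "mons_deg p d = {a \<in> mons_deg (Suc p) d. a p = 0}"
proof
  show "mons_deg p d \<subseteq> {a \<in> mons_deg (Suc p) d. a p = 0}"
  proof
    fix a assume a: "a \<in> mons_deg p d"
    then have am: "a \<in> mons p" "mdeg p a = d" unfolding mons_deg_def by auto
    have "a p = 0" using am(1) unfolding mons_def by simp
    moreover have "a \<in> mons (Suc p)" using mons_mono[OF am(1)] by simp
    ultimately show "a \<in> {a \<in> mons_deg (Suc p) d. a p = 0}" using am(2) mdeg_Suc[of p a]
      unfolding mons_deg_def by simp
  qed
next
  show "{a \<in> mons_deg (Suc p) d. a p = 0} \<subseteq> mons_deg p d"
  proof
    fix a assume a: "a \<in> {a \<in> mons_deg (Suc p) d. a p = 0}"
    then have "a \<in> mons (Suc p)" "mdeg (Suc p) a = d" "a p = 0" unfolding mons_deg_def by auto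
    then show "a \<in> mons_deg p d" using mons_Suc_p mdeg_Suc[of p a] unfolding mons_deg_def by simp
  qed
qed

lemma pz_sub: "X \<subseteq> mons_deg (Suc p) d \<Longrightarrow> pz p X \<subseteq> mons_deg p d"
  unfolding pz_def using mons_deg_p by blast

lemma up_inj: "inj_on (\<lambda>a. a(p := Suc (a p))) X"
proof (rule inj_onI)
  fix a b assume "a(p := Suc (a p)) = b(p := Suc (b p))"
  then have e: "\<And>j. (a(p := Suc (a p))) j = (b(p := Suc (b p))) j" by simp
  show "a = b"
  proof
    fix j show "a j = b j" using e[of j] by (cases "j = p") simp_all
  qed
qed

lemma shad_stab:
  assumes X: "X \<subseteq> mons_deg (Suc p) d" and st: "stab p X"
  shows "card (shad (Suc p) X) = card (shad p (pz p X)) + card X"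
proof -
  let ?up = "\<lambda>a. a(p := Suc (a p))"
  have eq: "shad (Suc p) X = shad p (pz p X) \<union> ?up ` X"
  proof
    show "shad (Suc p) X \<subseteq> shad p (pz p X) \<union> ?up ` X"
    proof
      fix b assume "b \<in> shad (Suc p) X"
      then obtain a k where a: "a \<in> X" "k < Suc p" "b = a(k := Suc (a k))" by (rule shadE)
      show "b \<in> shad p (pz p X) \<union> ?up ` X"
      proof (cases "k = p")
        case True then show ?thesis using a by blast
      next
        case False
        then have kp: "k < p" using a(2) by simp
        show ?thesis
        proof (cases "a p = 0")
          case True
          then have "a \<in> pz p X" unfolding pz_def using a by simp
          then show ?thesis using shadI[OF _ kp] a(3) by blast
        next
          case False
          let ?a' = "(a(p := a p - 1))(k := Suc (a k))"
          have "?a' \<in> X" using st a(1) False kp unfolding stab_def by blast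
          moreover have "b = ?up ?a'"
          proof
            fix j show "b j = (?up ?a') j" using a(3) False kp by (cases "j = p"; cases "j = k") auto
          qed
          ultimately show ?thesis by blast
        qed
      qed
    qed
  next
    show "shad p (pz p X) \<union> ?up ` X \<subseteq> shad (Suc p) X"
    proof
      fix b assume "b \<in> shad p (pz p X) \<union> ?up ` X"
      then show "b \<in> shad (Suc p) X"
      proof
        assume "b \<in> shad p (pz p X)"
        then obtain a k where "a \<in> pz p X" "k < p" "b = a(k := Suc (a k))" by (rule shadE)
        then show ?thesis using shadI[of a X k "Suc p"] unfolding pz_def by simp
      next
        assume "b \<in> ?up ` X"
        then show ?thesis using shadI[of _ X p "Suc p"] by auto
      qed
    qed
  qed
  have disj: "shad p (pz p X) \<inter> ?up ` X = {}"
  proof -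
    { fix b assume b1: "b \<in> shad p (pz p X)" and b2: "b \<in> ?up ` X"
      obtain a k where a: "a \<in> pz p X" "k < p" "b = a(k := Suc (a k))" using b1 by (rule shadE)
      have "b p = 0" using a unfolding pz_def by simp
      moreover have "b p > 0" using b2 by auto
      ultimately have False by simp }
    then show ?thesis by blast
  qed
  have fX: "finite X" using X finite_sub_mons by blast
  have f1: "finite (shad p (pz p X))" using finite_shad[of "pz p X"] fX unfolding pz_def by simp
  have "card (shad (Suc p) X) = card (shad p (pz p X)) + card (?up ` X)"
    unfolding eq by (rule card_Un_disjoint[OF f1 _ disj]) (use fX in simp)
  also have "card (?up ` X) = card X" by (rule card_image[OF up_inj])
  finally show ?thesis .
qed

lemma LS_stab: "stab p (LS (Suc p) d k)"
  unfolding stab_def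
proof (intro ballI impI allI)
  fix a i assume a: "a \<in> LS (Suc p) d k" and ap: "0 < a p" and ip: "i < p"
  let ?a' = "(a(p := a p - 1))(i := Suc (a i))"
  have am: "a \<in> mons (Suc p)" "mdeg (Suc p) a = d" using a LS_sub unfolding mons_deg_def by auto
  have p1: "p < Suc p" by simp
  have i1: "i < Suc p" using ip by simp
  have m1: "a(p := a p - 1) \<in> mons (Suc p)" using mons_upd[OF am(1) p1] .
  have m2: "?a' \<in> mons (Suc p)" using mons_upd[OF m1 i1] .
  have d1: "Suc (mdeg (Suc p) (a(p := a p - 1))) = d" using mdeg_dec[of p "Suc p" a, OF p1 ap] am(2) by simp
  have d2: "mdeg (Suc p) ?a' = Suc (mdeg (Suc p) (a(p := a p - 1)))"
    using mdeg_inc[OF i1, of "a(p := a p - 1)"] ip by simp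
  have a'm: "?a' \<in> mons_deg (Suc p) d" using m2 d1 d2 unfolding mons_deg_def by simp
  have l1: "\<forall>j<i. ?a' j = a j" using ip by simp
  have l2: "a i < ?a' i" by simp
  have "lex_gt ?a' a" unfolding lex_gt_def using l1 l2 by blast
  then show "?a' \<in> LS (Suc p) d k" using LS_up[OF a a'm] by simp
qed

lemma pz_LS: "pz p (LS (Suc p) d k) = LS p d (card (pz p (LS (Suc p) d k)))"
proof (rule LS_eq)
  show "pz p (LS (Suc p) d k) \<subseteq> mons_deg p d" using pz_sub[OF LS_sub] .
  show "\<forall>a\<in>pz p (LS (Suc p) d k). \<forall>b\<in>mons_deg p d. lex_gt b a \<longrightarrow> b \<in> pz p (LS (Suc p) d k)"
  proof (intro ballI impI)
    fix a b assume a: "a \<in> pz p (LS (Suc p) d k)" and b: "b \<in> mons_deg p d" and gt: "lex_gt b a"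
    have "b \<in> {a \<in> mons_deg (Suc p) d. a p = 0}" using b by (subst (asm) mons_deg_p) simp
    then have b1: "b \<in> mons_deg (Suc p) d" "b p = 0" by simp_all
    have "b \<in> LS (Suc p) d k" using LS_up[OF _ b1(1) gt] a unfolding pz_def by simp
    then show "b \<in> pz p (LS (Suc p) d k)" using b1 unfolding pz_def by simp
  qed
qed

lemma card_decomp:
  assumes X: "X \<subseteq> mons_deg (Suc p) (Suc d)"
  shows "card X = card (pz p X) + card (qt p d X)"
proof -
  let ?up = "\<lambda>a. a(p := Suc (a p))"
  have p1: "p < Suc p" by simp
  have eq: "X = pz p X \<union> ?up ` qt p d X"
  proof
    show "X \<subseteq> pz p X \<union> ?up ` qt p d X"
    proof
      fix a assume a: "a \<in> X"
      show "a \<in> pz p X \<union> ?up ` qt p d X"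
      proof (cases "a p = 0")
        case True then show ?thesis using a unfolding pz_def by simp
      next
        case False
        let ?c = "a(p := a p - 1)"
        have am: "a \<in> mons (Suc p)" "mdeg (Suc p) a = Suc d" using a X unfolding mons_deg_def by auto
        have "?c \<in> mons (Suc p)" using mons_upd[OF am(1) p1] .
        moreover have "Suc (mdeg (Suc p) ?c) = Suc d" using mdeg_dec[of p "Suc p" a, OF p1] False am(2) by simp
        ultimately have cm: "?c \<in> mons_deg (Suc p) d" unfolding mons_deg_def by simp
        have ua: "?up ?c = a"
        proof
          fix j show "?up ?c j = a j" using False by (cases "j = p") simp_all
        qed
        then have "?c \<in> qt p d X" unfolding qt_def using cm a by simp
        then have "?up ?c \<in> ?up ` qt p d X" by (rule imageI)
        then show ?thesis using ua by simp
      qed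
    qed
  next
    show "pz p X \<union> ?up ` qt p d X \<subseteq> X" unfolding pz_def qt_def by auto
  qed
  have disj: "pz p X \<inter> ?up ` qt p d X = {}" unfolding pz_def by auto
  have fX: "finite X" using X finite_sub_mons by blast
  have fq: "finite (qt p d X)" unfolding qt_def using finite_mons_deg by simp
  have "card X = card (pz p X) + card (?up ` qt p d X)"
    by (subst eq, rule card_Un_disjoint[OF _ _ disj]) (use fX fq in \<open>simp_all add: pz_def\<close>)
  also have "card (?up ` qt p d X) = card (qt p d X)" by (rule card_image[OF up_inj])
  finally show ?thesis .
qed

lemma qt_shad: assumes st: "stab p X" shows "shad (Suc p) (qt p d X) \<subseteq> X"
proof
  fix b assume "b \<in> shad (Suc p) (qt p d X)"
  then obtain c k where c: "c \<in> qt p d X" "k < Suc p" "b = c(k := Suc (c k))" by (rule shadE)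
  let ?a = "c(p := Suc (c p))"
  have aX: "?a \<in> X" using c(1) unfolding qt_def by simp
  show "b \<in> X"
  proof (cases "k = p")
    case True then show ?thesis using aX c(3) by simp
  next
    case False
    then have kp: "k < p" using c(2) by simp
    have pos: "0 < ?a p" by simp
    have "\<forall>i<p. (?a(p := ?a p - 1))(i := Suc (?a i)) \<in> X"
      using st aX pos unfolding stab_def by blast
    then have "(?a(p := ?a p - 1))(k := Suc (?a k)) \<in> X" using kp by blast
    moreover have "(?a(p := ?a p - 1))(k := Suc (?a k)) = b"
    proof
      fix j show "((?a(p := ?a p - 1))(k := Suc (?a k))) j = b j"
        using c(3) False by (cases "j = p"; cases "j = k") auto
    qed
    ultimately show ?thesis by simp
  qed
qed


lemma pz_deg0: assumes "X \<subseteq> mons_deg m 0" "p < m" shows "pz p X = X"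
proof -
  { fix a assume "a \<in> X"
    then have "a p \<le> mdeg m a" "mdeg m a = 0" using assms le_mdeg[of p m a] unfolding mons_deg_def by auto
    then have "a p = 0" by simp }
  then show ?thesis unfolding pz_def by blast
qed

lemma card_sub_mons: "A \<subseteq> mons_deg m d \<Longrightarrow> card A \<le> card (mons_deg m d)"
  by (rule card_mono[OF finite_mons_deg])

lemma MAC_stable:
  assumes IHp: "\<And>d A. A \<subseteq> mons_deg p d \<Longrightarrow> macq p d A"
    and IHd: "\<And>d' B. d = Suc d' \<Longrightarrow> B \<subseteq> mons_deg (Suc p) d' \<Longrightarrow> macq (Suc p) d' B"
    and A: "A \<subseteq> mons_deg (Suc p) d" and st: "stab p A"
  shows "macq (Suc p) d A"
proof -
  define k where "k = card A"
  define L where "L = LS (Suc p) d k"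
  have fA: "finite A" using A finite_sub_mons by blast
  have kle: "k \<le> card (mons_deg (Suc p) d)" unfolding k_def using card_sub_mons[OF A] .
  have cL: "card L = k" unfolding L_def using card_LS[of "Suc p" d k] kle by simp
  have Lsub: "L \<subseteq> mons_deg (Suc p) d" unfolding L_def by (rule LS_sub)
  have e1: "card (shad (Suc p) A) = card (shad p (pz p A)) + k"
    unfolding k_def by (rule shad_stab[OF A st])
  have e2: "card (shad (Suc p) L) = card (shad p (pz p L)) + k"
    using shad_stab[OF Lsub] LS_stab cL unfolding L_def by simp
  have c3: "card (pz p L) \<le> card (pz p A)"
  proof (cases d)
    case 0
    then have "pz p L = L" "pz p A = A" using pz_deg0 Lsub A by auto
    then show ?thesis using cL k_def by simp
  next
    case (Suc d')
    define B where "B = qt p d' A"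
    have A': "A \<subseteq> mons_deg (Suc p) (Suc d')" using A Suc by simp
    have k1: "k = card (pz p A) + card B" unfolding k_def B_def by (rule card_decomp[OF A'])
    have Bsub: "B \<subseteq> mons_deg (Suc p) d'" unfolding B_def qt_def by auto
    have sB: "shad (Suc p) B \<subseteq> A" unfolding B_def by (rule qt_shad[OF st])
    have "card (shad (Suc p) B) \<le> k" unfolding k_def using card_mono[OF fA sB] .
    moreover have "card (shad (Suc p) (LS (Suc p) d' (card B))) \<le> card (shad (Suc p) B)"
      using IHd[OF Suc Bsub] unfolding macq_def .
    ultimately have ck: "card (shad (Suc p) (LS (Suc p) d' (card B))) \<le> k" by simp
    have sub: "shad (Suc p) (LS (Suc p) d' (card B)) \<subseteq> L"
    proof -
      have "shad (Suc p) (LS (Suc p) d' (card B)) = LS (Suc p) (Suc d') (card (shad (Suc p) (LS (Suc p) d' (card B))))"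
        by (rule shad_LS_eq)
      also have "\<dots> \<subseteq> LS (Suc p) (Suc d') k" using LS_mono[OF ck] .
      finally show ?thesis unfolding L_def using Suc by simp
    qed
    have sub2: "LS (Suc p) d' (card B) \<subseteq> qt p d' L"
    proof
      fix c assume c: "c \<in> LS (Suc p) d' (card B)"
      have "c(p := Suc (c p)) \<in> shad (Suc p) (LS (Suc p) d' (card B))" using shadI[OF c, of p "Suc p"] by simp
      then have "c(p := Suc (c p)) \<in> L" using sub by blast
      then show "c \<in> qt p d' L" unfolding qt_def using c LS_sub by blast
    qed
    have cB: "card (LS (Suc p) d' (card B)) = card B"
      using card_LS[of "Suc p" d' "card B"] card_sub_mons[OF Bsub] by simp
    have fq: "finite (qt p d' L)" unfolding qt_def using finite_mons_deg by simp
    have "card B \<le> card (qt p d' L)" using card_mono[OF fq sub2] cB by simp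
    moreover have k2: "k = card (pz p L) + card (qt p d' L)"
      using card_decomp[of L p d'] Lsub Suc cL by simp
    ultimately show ?thesis using k1 by simp
  qed
  have pzL: "pz p L = LS p d (card (pz p L))" unfolding L_def by (rule pz_LS)
  have IH: "card (shad p (LS p d (card (pz p A)))) \<le> card (shad p (pz p A))"
    using IHp[OF pz_sub[OF A]] unfolding macq_def .
  have "shad p (pz p L) \<subseteq> shad p (LS p d (card (pz p A)))"
    using pzL LS_mono[OF c3] shad_mono by metis
  moreover have "finite (shad p (LS p d (card (pz p A))))"
    using finite_shad[OF finite_sub_mons[OF LS_sub]] .
  ultimately have "card (shad p (pz p L)) \<le> card (shad p (LS p d (card (pz p A))))"
    by (rule card_mono[rotated])
  then have "card (shad (Suc p) L) \<le> card (shad (Suc p) A)" using e1 e2 IH by simp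
  then show ?thesis unfolding macq_def L_def k_def .
qed

lemma MAC_reduce:
  assumes st: "\<And>A. A \<subseteq> mons_deg (Suc p) d \<Longrightarrow> stab p A \<Longrightarrow> macq (Suc p) d A"
  shows "A \<subseteq> mons_deg (Suc p) d \<Longrightarrow> macq (Suc p) d A"
proof (induction "mu p A" arbitrary: A rule: less_induct)
  case less
  show ?case
  proof (cases "stab p A")
    case True then show ?thesis using st less.prems by simp
  next
    case False
    then obtain a i where a: "a \<in> A" "0 < a p" "i < p" "(a(p := a p - 1))(i := Suc (a i)) \<notin> A"
      unfolding stab_def by blast
    have ip: "i < Suc p" "p < Suc p" "i \<noteq> p" using a(3) by auto
    have ne: "cmpr (Suc p) d i p A \<noteq> A"
      using cmpr_fix_stab[OF ip less.prems _ a(1) a(2)] a(4) by blast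
    have mu: "mu p (cmpr (Suc p) d i p A) < mu p A" by (rule cmpr_mu[OF ip less.prems ne])
    have IH: "macq (Suc p) d (cmpr (Suc p) d i p A)" using less.hyps[OF mu cmpr_sub[OF ip]] .
    have cc: "card (cmpr (Suc p) d i p A) = card A" by (rule card_comp[OF ip less.prems])
    have cs: "card (shad (Suc p) (cmpr (Suc p) d i p A)) \<le> card (shad (Suc p) A)"
      by (rule cmpr_shad[OF ip less.prems])
    show ?thesis using IH cc cs unfolding macq_def by simp
  qed
qed

theorem MAC: "A \<subseteq> mons_deg m d \<Longrightarrow> macq m d A"
proof (induction m arbitrary: d A)
  case 0
  have "shad 0 X = {}" for X unfolding shad_def by simp
  then show ?case unfolding macq_def by simp
next
  case (Suc p)
  have IHp: "\<And>d A. A \<subseteq> mons_deg p d \<Longrightarrow> macq p d A" by (rule Suc.IH)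
  have "\<forall>A. A \<subseteq> mons_deg (Suc p) d \<longrightarrow> macq (Suc p) d A"
  proof (induction d)
    case 0
    show ?case
    proof (intro allI impI)
      fix A assume A0: "A \<subseteq> mons_deg (Suc p) 0"
      have st: "\<And>B. B \<subseteq> mons_deg (Suc p) 0 \<Longrightarrow> stab p B \<Longrightarrow> macq (Suc p) 0 B"
        by (rule MAC_stable[OF IHp]) auto
      show "macq (Suc p) 0 A" by (rule MAC_reduce[OF st A0])
    qed
  next
    case (Suc d')
    show ?case
    proof (intro allI impI)
      fix A assume A0: "A \<subseteq> mons_deg (Suc p) (Suc d')"
      have st: "\<And>B. B \<subseteq> mons_deg (Suc p) (Suc d') \<Longrightarrow> stab p B \<Longrightarrow> macq (Suc p) (Suc d') B"
        by (rule MAC_stable[OF IHp]) (use Suc.IH in auto)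
      show "macq (Suc p) (Suc d') A" by (rule MAC_reduce[OF st A0])
    qed
  qed
  then show ?case using Suc.prems by blast
qed

lemma MAC_ideal:
  assumes J: "monomial_ideal m J"
  shows "shad m (LS m e (card (J \<inter> mons_deg m e))) \<subseteq> LS m (Suc e) (card (J \<inter> mons_deg m (Suc e)))"
proof -
  let ?Je = "J \<inter> mons_deg m e"
  let ?J1 = "J \<inter> mons_deg m (Suc e)"
  have sJ: "shad m ?Je \<subseteq> ?J1"
  proof
    fix b assume "b \<in> shad m ?Je"
    then obtain a i where a: "a \<in> ?Je" "i < m" "b = a(i := Suc (a i))" by (rule shadE)
    have bm: "b \<in> mons_deg m (Suc e)" using shad_sub[of ?Je m e] \<open>b \<in> shad m ?Je\<close> by blast
    have "mdvd a b" unfolding mdvd_def using a(3) by simp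
    then have "b \<in> J" using J a bm unfolding monomial_ideal_def mons_deg_def by blast
    then show "b \<in> ?J1" using bm by simp
  qed
  have f1: "finite ?J1" using finite_mons_deg by simp
  have "card (shad m (LS m e (card ?Je))) \<le> card (shad m ?Je)" using MAC[of ?Je m e] unfolding macq_def by simp
  also have "\<dots> \<le> card ?J1" using card_mono[OF f1 sJ] .
  finally have c: "card (shad m (LS m e (card ?Je))) \<le> card ?J1" .
  have "shad m (LS m e (card ?Je)) = LS m (Suc e) (card (shad m (LS m e (card ?Je))))" by (rule shad_LS_eq)
  also have "\<dots> \<subseteq> LS m (Suc e) (card ?J1)" using LS_mono[OF c] .
  finally show ?thesis .
qed


definition ev :: "nat \<Rightarrow> nat \<Rightarrow> nat" where "ev i = (\<lambda>j. if j = i then 1 else 0)"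

lemma ev_mons: "i < n \<Longrightarrow> ev i \<in> mons_deg n 1"
  unfolding mons_deg_def mons_def mdeg_def ev_def by auto

lemma deg1_ev:
  assumes "a \<in> mons_deg n 1" shows "\<exists>i<n. a = ev i"
proof -
  have am: "a \<in> mons n" "mdeg n a = 1" using assms unfolding mons_deg_def by auto
  have "\<exists>i<n. 0 < a i"
  proof (rule ccontr)
    assume "\<not> ?thesis"
    then have "\<forall>i<n. a i = 0" by simp
    then have "mdeg n a = 0" unfolding mdeg_def by simp
    then show False using am by simp
  qed
  then obtain i where i: "i < n" "0 < a i" by blast
  have "mdvd (ev i) a" unfolding mdvd_def ev_def using i by auto
  then have "ev i = a" using mdvd_eq[of "ev i" a n] ev_mons[OF i(1)] am unfolding mons_deg_def by simp
  then show ?thesis using i by auto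
qed

lemma ev_inj: "inj ev"
proof (rule injI)
  fix i j assume "ev i = ev j"
  then have "ev i i = ev j i" by simp
  then show "i = j" unfolding ev_def by (cases "i = j") auto
qed

lemma hilb_sub: "hilb n I e \<le> card (mons_deg n e)"
  unfolding hilb_def by (rule card_mono[OF finite_mons_deg]) auto

lemma Oseq_ideal:
  assumes O: "O_sequence g" and g1: "g 1 = m"
  shows "\<exists>J. monomial_ideal m J \<and> (\<forall>e. g e = hilb m J e)"
proof -
  obtain n' J where J: "monomial_ideal n' J" and gJ: "\<forall>d. g d = hilb n' J d"
    using O unfolding O_sequence_def by blast
  define W where "W = {i. i < n' \<and> ev i \<notin> J}"
  have Wsub: "W \<subseteq> {..<n'}" unfolding W_def by auto
  have fW: "finite W" using Wsub finite_subset by blast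
  have d1: "{a \<in> mons_deg n' 1. a \<notin> J} = ev ` W"
  proof
    show "{a \<in> mons_deg n' 1. a \<notin> J} \<subseteq> ev ` W"
    proof
      fix a assume a: "a \<in> {a \<in> mons_deg n' 1. a \<notin> J}"
      then obtain i where "i < n'" "a = ev i" using deg1_ev by blast
      then show "a \<in> ev ` W" unfolding W_def using a by blast
    qed
  next
    show "ev ` W \<subseteq> {a \<in> mons_deg n' 1. a \<notin> J}" unfolding W_def using ev_mons by auto
  qed
  have cW: "card W = m"
  proof -
    have "m = hilb n' J 1" using gJ g1 by simp
    also have "\<dots> = card (ev ` W)" unfolding hilb_def d1 ..
    also have "\<dots> = card W" using card_image[OF inj_on_subset[OF ev_inj]] by simp
    finally show ?thesis by simp
  qed
  obtain f where f: "bij_betw f W {..<m}"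
    using finite_same_card_bij[OF fW, of "{..<m}"] cW by auto
  define finv where "finv = inv_into W f"
  have fW': "\<And>i. i \<in> W \<Longrightarrow> f i < m" using f unfolding bij_betw_def by auto
  have finv1: "\<And>j. j < m \<Longrightarrow> finv j \<in> W \<and> f (finv j) = j"
    using f unfolding finv_def bij_betw_def by (auto intro: inv_into_into f_inv_into_f)
  have finv2: "\<And>i. i \<in> W \<Longrightarrow> finv (f i) = i"
    using f unfolding finv_def bij_betw_def by (simp add: inv_into_f_f)
  define P where "P = (\<lambda>b::nat\<Rightarrow>nat. (\<lambda>i. if i \<in> W then b (f i) else 0))"
  define J2 where "J2 = {b \<in> mons m. P b \<in> J}"
  have Pm: "\<And>b. P b \<in> mons n'" unfolding P_def mons_def using Wsub by auto
  have Pdeg: "\<And>b. b \<in> mons m \<Longrightarrow> mdeg n' (P b) = mdeg m b"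
  proof -
    fix b :: "nat \<Rightarrow> nat" assume b: "b \<in> mons m"
    have "mdeg n' (P b) = (\<Sum>i\<in>{..<n'}. if i \<in> W then b (f i) else 0)" unfolding mdeg_def P_def ..
    also have "\<dots> = (\<Sum>i\<in>{..<n'} \<inter> W. b (f i))" by (rule sum.inter_restrict[symmetric]) simp
    also have "{..<n'} \<inter> W = W" using Wsub by blast
    also have "(\<Sum>i\<in>W. b (f i)) = (\<Sum>j\<in>{..<m}. b j)" by (rule sum.reindex_bij_betw[OF f])
    finally show "mdeg n' (P b) = mdeg m b" unfolding mdeg_def .
  qed
  have mi: "monomial_ideal m J2"
    unfolding monomial_ideal_def
  proof (intro conjI ballI impI)
    show "J2 \<subseteq> mons m" unfolding J2_def by auto
  next
    fix a b assume a: "a \<in> J2" and b: "b \<in> mons m" and ab: "mdvd a b"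
    have "mdvd (P a) (P b)" using ab unfolding mdvd_def P_def by auto
    then have "P b \<in> J" using J a Pm unfolding monomial_ideal_def J2_def by blast
    then show "b \<in> J2" unfolding J2_def using b by simp
  qed
  have supp: "\<And>a. a \<in> mons n' \<Longrightarrow> a \<notin> J \<Longrightarrow> i \<notin> W \<Longrightarrow> a i = 0" for i
  proof -
    fix a assume a: "a \<in> mons n'" "a \<notin> J" and iW: "i \<notin> W"
    show "a i = 0"
    proof (rule ccontr)
      assume ai: "a i \<noteq> 0"
      then have "i < n'" using mons_nz[OF a(1)] by simp
      then have evJ: "ev i \<in> J" using iW unfolding W_def by simp
      have "mdvd (ev i) a" unfolding mdvd_def ev_def using ai by auto
      then have "a \<in> J" using J evJ a(1) unfolding monomial_ideal_def by blast
      then show False using a(2) by simp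
    qed
  qed
  have "\<forall>e. g e = hilb m J2 e"
  proof
    fix e
    have bij: "bij_betw P {b \<in> mons_deg m e. b \<notin> J2} {a \<in> mons_deg n' e. a \<notin> J}"
    proof (rule bij_betw_imageI)
      show "inj_on P {b \<in> mons_deg m e. b \<notin> J2}"
      proof (rule inj_onI)
        fix b b' assume b: "b \<in> {b \<in> mons_deg m e. b \<notin> J2}" and b': "b' \<in> {b \<in> mons_deg m e. b \<notin> J2}"
          and eq: "P b = P b'"
        show "b = b'"
        proof
          fix j show "b j = b' j"
          proof (cases "j < m")
            case True
            then have "P b (finv j) = P b' (finv j)" using eq by simp
            then show ?thesis using finv1[OF True] unfolding P_def by simp
          next
            case False
            then show ?thesis using b b' unfolding mons_deg_def mons_def by auto
          qed
        qed
      qed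
    next
      show "P ` {b \<in> mons_deg m e. b \<notin> J2} = {a \<in> mons_deg n' e. a \<notin> J}"
      proof
        show "P ` {b \<in> mons_deg m e. b \<notin> J2} \<subseteq> {a \<in> mons_deg n' e. a \<notin> J}"
          using Pm Pdeg unfolding J2_def mons_deg_def by auto
      next
        show "{a \<in> mons_deg n' e. a \<notin> J} \<subseteq> P ` {b \<in> mons_deg m e. b \<notin> J2}"
        proof
          fix a assume a: "a \<in> {a \<in> mons_deg n' e. a \<notin> J}"
          then have am: "a \<in> mons n'" "mdeg n' a = e" "a \<notin> J" unfolding mons_deg_def by auto
          define b where "b = (\<lambda>j. if j < m then a (finv j) else 0)"
          have bm: "b \<in> mons m" unfolding b_def mons_def by auto
          have Pb: "P b = a"
          proof
            fix i show "P b i = a i"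
            proof (cases "i \<in> W")
              case True then show ?thesis unfolding P_def b_def using fW' finv2 by simp
            next
              case False then show ?thesis unfolding P_def using supp[OF am(1) am(3)] by simp
            qed
          qed
          have "mdeg m b = e" using Pdeg[OF bm] Pb am(2) by simp
          moreover have "b \<notin> J2" unfolding J2_def using Pb am(3) by simp
          ultimately have "b \<in> {b \<in> mons_deg m e. b \<notin> J2}" using bm unfolding mons_deg_def by simp
          then show "a \<in> P ` {b \<in> mons_deg m e. b \<notin> J2}" using Pb by (metis imageI)
        qed
      qed
    qed
    have "g e = hilb n' J e" using gJ by simp
    also have "\<dots> = card {a \<in> mons_deg n' e. a \<notin> J}" unfolding hilb_def ..
    also have "\<dots> = card {b \<in> mons_deg m e. b \<notin> J2}" using bij_betw_same_card[OF bij] by simp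
    finally show "g e = hilb m J2 e" unfolding hilb_def .
  qed
  then show ?thesis using mi by blast
qed

lemma lex_closure:
  assumes O: "O_sequence g" and g1: "g 1 = m"
  shows "shad m (lex_seg m g e) \<subseteq> lex_seg m g (Suc e)" "g e \<le> card (mons_deg m e)"
proof -
  obtain J where J: "monomial_ideal m J" and gJ: "\<forall>e. g e = hilb m J e" using Oseq_ideal[OF O g1] by blast
  have c: "\<And>e. card (J \<inter> mons_deg m e) = card (mons_deg m e) - g e"
  proof -
    fix e
    have f1: "finite (J \<inter> mons_deg m e)" using finite_mons_deg by simp
    have f2: "finite {a \<in> mons_deg m e. a \<notin> J}" using finite_mons_deg by simp
    have "card ((J \<inter> mons_deg m e) \<union> {a \<in> mons_deg m e. a \<notin> J}) = card (J \<inter> mons_deg m e) + card {a \<in> mons_deg m e. a \<notin> J}"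
      by (rule card_Un_disjoint[OF f1 f2]) blast
    moreover have "(J \<inter> mons_deg m e) \<union> {a \<in> mons_deg m e. a \<notin> J} = mons_deg m e" by blast
    ultimately have "card (mons_deg m e) = card (J \<inter> mons_deg m e) + card {a \<in> mons_deg m e. a \<notin> J}" by simp
    then show "card (J \<inter> mons_deg m e) = card (mons_deg m e) - g e" using gJ unfolding hilb_def by simp
  qed
  show "shad m (lex_seg m g e) \<subseteq> lex_seg m g (Suc e)"
    using MAC_ideal[OF J, of e] unfolding lex_seg_LS c .
  show "g e \<le> card (mons_deg m e)" using gJ hilb_sub[of m J e] by simp
qed


lemma gen_ideal_sub: "gen_ideal n G \<subseteq> mons n" unfolding gen_ideal_def by auto

lemma gen_ideal_mi: "monomial_ideal n (gen_ideal n G)"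
  unfolding monomial_ideal_def
proof (intro conjI ballI impI)
  show "gen_ideal n G \<subseteq> mons n" by (rule gen_ideal_sub)
next
  fix a b assume a: "a \<in> gen_ideal n G" and b: "b \<in> mons n" and ab: "mdvd a b"
  obtain c where c: "c \<in> G" "mdvd c a" using a unfolding gen_ideal_def by blast
  have "mdvd c b" using c(2) ab le_trans unfolding mdvd_def by blast
  then show "b \<in> gen_ideal n G" unfolding gen_ideal_def using b c(1) by blast
qed

lemma mi_up: "monomial_ideal n I \<Longrightarrow> a \<in> I \<Longrightarrow> b \<in> mons n \<Longrightarrow> mdvd a b \<Longrightarrow> b \<in> I"
  unfolding monomial_ideal_def by blast

lemma mi_sub: "monomial_ideal n I \<Longrightarrow> a \<in> I \<Longrightarrow> a \<in> mons n"
  unfolding monomial_ideal_def by blast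

lemma mdvd_refl: "mdvd a a" unfolding mdvd_def by simp

lemma lex_seg_sub: "lex_seg m g e \<subseteq> mons_deg m e" unfolding lex_seg_LS by (rule LS_sub)

lemma Lex_sub: "Lex m g \<subseteq> mons m" unfolding Lex_def by (rule gen_ideal_sub)

lemma Lex_mi: "monomial_ideal m (Lex m g)"
  unfolding Lex_def by (rule gen_ideal_mi)

lemma lex_seg_Lex: "lex_seg m g e \<subseteq> Lex m g"
  unfolding Lex_def gen_ideal_def using lex_seg_sub mdvd_refl unfolding mons_deg_def by blast

lemma Lex_big: assumes "g e = 0" shows "mons_deg m e \<subseteq> Lex m g"
proof -
  have "lex_seg m g e = mons_deg m e" unfolding lex_seg_LS using assms by (simp add: LS_all)
  then show ?thesis using lex_seg_Lex by blast
qed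

lemma lex_seg_move:
  assumes a: "a \<in> lex_seg m g e" and j: "0 < a j" and ij: "i < j"
  shows "(a(j := a j - 1))(i := a i + 1) \<in> lex_seg m g e"
proof -
  let ?a' = "(a(j := a j - 1))(i := a i + 1)"
  have am: "a \<in> mons m" "mdeg m a = e" using a lex_seg_sub unfolding mons_deg_def by auto
  have jm: "j < m" using mons_nz[OF am(1)] j by simp
  have im: "i < m" using ij jm by simp
  have m1: "a(j := a j - 1) \<in> mons m" using mons_upd[OF am(1) jm] .
  have m2: "?a' \<in> mons m" using mons_upd[OF m1 im] .
  have d1: "Suc (mdeg m (a(j := a j - 1))) = e" using mdeg_dec[of j m a, OF jm j] am(2) by simp
  have d2: "mdeg m ?a' = Suc (mdeg m (a(j := a j - 1)))"
    using mdeg_inc[OF im, of "a(j := a j - 1)"] ij by simp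
  have a'm: "?a' \<in> mons_deg m e" using m2 d1 d2 unfolding mons_deg_def by simp
  have l1: "\<forall>j'<i. ?a' j' = a j'" using ij by simp
  have l2: "a i < ?a' i" by simp
  have "lex_gt ?a' a" unfolding lex_gt_def using l1 l2 by blast
  then show ?thesis using LS_up[of a m e] a a'm unfolding lex_seg_LS by blast
qed

lemma Lex_move:
  assumes a: "a \<in> Lex m g" and j: "0 < a j" and ij: "i < j"
  shows "(a(j := a j - 1))(i := a i + 1) \<in> Lex m g"
proof -
  let ?a' = "(a(j := a j - 1))(i := a i + 1)"
  obtain e s where s: "s \<in> lex_seg m g e" "mdvd s a" and am: "a \<in> mons m"
    using a unfolding Lex_def gen_ideal_def by blast
  have jm: "j < m" using mons_nz[OF am] j by simp
  have im: "i < m" using ij jm by simp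
  have a'm: "?a' \<in> mons m" using mons_upd[OF mons_upd[OF am jm] im] .
  show ?thesis
  proof (cases "s j < a j")
    case True
    have "mdvd s ?a'" unfolding mdvd_def
    proof
      fix x show "s x \<le> ?a' x" using s(2) True ij unfolding mdvd_def
        by (cases "x = i"; cases "x = j") (auto simp: le_SucI)
    qed
    then show ?thesis using mi_up[OF Lex_mi] lex_seg_Lex s(1) a'm by blast
  next
    case False
    then have sj: "s j = a j" using s(2) unfolding mdvd_def by (simp add: le_antisym not_less)
    let ?s' = "(s(j := s j - 1))(i := s i + 1)"
    have sj0: "0 < s j" using sj j by simp
    have "?s' \<in> lex_seg m g e" by (rule lex_seg_move[OF s(1) sj0 ij])
    moreover have "mdvd ?s' ?a'" using s(2) sj ij unfolding mdvd_def by auto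
    ultimately show ?thesis using mi_up[OF Lex_mi] lex_seg_Lex a'm by blast
  qed
qed

context
  fixes m :: nat and g :: "nat \<Rightarrow> nat"
  assumes clos: "\<And>e. shad m (lex_seg m g e) \<subseteq> lex_seg m g (Suc e)"
    and gb: "\<And>e. g e \<le> card (mons_deg m e)"
begin

lemma lex_seg_grow:
  "s \<in> lex_seg m g e \<Longrightarrow> t \<in> mons_deg m (e + j) \<Longrightarrow> mdvd s t \<Longrightarrow> t \<in> lex_seg m g (e + j)"
proof (induction j arbitrary: t)
  case 0
  have "s = t" using mdvd_eq[of s t m] 0 lex_seg_sub unfolding mons_deg_def by fastforce
  then show ?case using 0 by simp
next
  case (Suc j)
  have sm: "s \<in> mons m" "mdeg m s = e" using Suc.prems(1) lex_seg_sub unfolding mons_deg_def by auto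
  have tm: "t \<in> mons m" "mdeg m t = Suc (e + j)" using Suc.prems(2) unfolding mons_deg_def by auto
  have "\<exists>i. s i < t i"
  proof (rule ccontr)
    assume "\<not> ?thesis"
    then have "mdvd t s" unfolding mdvd_def by (simp add: not_less)
    then have "mdeg m t \<le> mdeg m s" by (rule mdvd_mdeg)
    then show False using sm tm by simp
  qed
  then obtain i where i: "s i < t i" by blast
  have im: "i < m" using mons_nz[OF tm(1)] i by simp
  have ti: "0 < t i" using i by simp
  let ?t' = "t(i := t i - 1)"
  have t'm: "?t' \<in> mons_deg m (e + j)"
    using mons_upd[OF tm(1) im] mdeg_dec[of i m t, OF im ti] tm(2) unfolding mons_deg_def by simp
  have "mdvd s ?t'" using Suc.prems(3) i unfolding mdvd_def by auto
  then have "?t' \<in> lex_seg m g (e + j)" by (rule Suc.IH[OF Suc.prems(1) t'm])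
  moreover have "t = ?t'(i := Suc (?t' i))"
  proof
    fix x show "t x = (?t'(i := Suc (?t' i))) x" using ti by (cases "x = i") simp_all
  qed
  ultimately have "t \<in> shad m (lex_seg m g (e + j))" using shadI[OF _ im] by metis
  then show ?case using clos by auto
qed

lemma Lex_deg: "Lex m g \<inter> mons_deg m e = lex_seg m g e"
proof
  show "lex_seg m g e \<subseteq> Lex m g \<inter> mons_deg m e" using lex_seg_Lex lex_seg_sub by blast
next
  show "Lex m g \<inter> mons_deg m e \<subseteq> lex_seg m g e"
  proof
    fix t assume t: "t \<in> Lex m g \<inter> mons_deg m e"
    then obtain e' s where s: "s \<in> lex_seg m g e'" "mdvd s t"
      unfolding Lex_def gen_ideal_def by blast
    have "mdeg m s \<le> mdeg m t" using mdvd_mdeg[OF s(2)] .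
    then have "e' \<le> e" using s(1) t lex_seg_sub unfolding mons_deg_def by fastforce
    then have "e = e' + (e - e')" by simp
    then show "t \<in> lex_seg m g e" using lex_seg_grow[OF s(1), of t "e - e'"] s(2) t by simp
  qed
qed

lemma hilb_Lex: "hilb m (Lex m g) e = g e"
proof -
  have "{a \<in> mons_deg m e. a \<notin> Lex m g} = mons_deg m e - lex_seg m g e"
    using Lex_deg by blast
  then have "hilb m (Lex m g) e = card (mons_deg m e - lex_seg m g e)" unfolding hilb_def by simp
  also have "\<dots> = card (mons_deg m e) - card (lex_seg m g e)"
    by (rule card_Diff_subset[OF finite_subset[OF lex_seg_sub finite_mons_deg] lex_seg_sub])
  also have "card (lex_seg m g e) = card (mons_deg m e) - g e"
    unfolding lex_seg_LS card_LS by simp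
  finally show ?thesis using gb[of e] by simp
qed

end


definition Cmp :: "nat \<Rightarrow> (nat \<Rightarrow> nat) set \<Rightarrow> nat \<Rightarrow> (nat \<Rightarrow> nat) set" where
  "Cmp n I e = {a \<in> mons_deg n e. a \<notin> I}"

lemma hilb_Cmp: "hilb n I e = card (Cmp n I e)" unfolding hilb_def Cmp_def ..

lemma tr_mons: "a \<in> mons (Suc m) \<Longrightarrow> a(m := 0) \<in> mons m"
  unfolding mons_def by (auto simp: Suc_le_eq)

lemma mdeg_tr: "mdeg (Suc m) a = mdeg m (a(m := 0)) + a m"
proof -
  have "mdeg m (a(m := 0)) = mdeg m a" unfolding mdeg_def by (rule sum.cong) auto
  then show ?thesis using mdeg_Suc[of m a] by simp
qed

lemma LR_iff:
  assumes a: "a \<in> mons (Suc m)"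
  shows "a \<in> gen_ideal (Suc m) (Lex m g) \<longleftrightarrow> a(m := 0) \<in> Lex m g"
proof
  assume "a \<in> gen_ideal (Suc m) (Lex m g)"
  then obtain b where b: "b \<in> Lex m g" "mdvd b a" unfolding gen_ideal_def by blast
  have "b m = 0" using b(1) Lex_sub unfolding mons_def by blast
  then have "mdvd b (a(m := 0))" using b(2) unfolding mdvd_def by simp
  then show "a(m := 0) \<in> Lex m g" using mi_up[OF Lex_mi b(1) tr_mons[OF a]] by simp
next
  assume "a(m := 0) \<in> Lex m g"
  moreover have "mdvd (a(m := 0)) a" unfolding mdvd_def by simp
  ultimately show "a \<in> gen_ideal (Suc m) (Lex m g)" unfolding gen_ideal_def using a by blast
qed

lemma up_tr: "(a(m := v))(m := 0) = a(m := 0)" by simp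

lemma hilb_LR_0: "hilb (Suc m) (gen_ideal (Suc m) (Lex m g)) 0 = hilb m (Lex m g) 0"
proof -
  have "Cmp (Suc m) (gen_ideal (Suc m) (Lex m g)) 0 = Cmp m (Lex m g) 0"
  proof
    show "Cmp (Suc m) (gen_ideal (Suc m) (Lex m g)) 0 \<subseteq> Cmp m (Lex m g) 0"
    proof
      fix a assume a: "a \<in> Cmp (Suc m) (gen_ideal (Suc m) (Lex m g)) 0"
      then have am: "a \<in> mons (Suc m)" "mdeg (Suc m) a = 0" unfolding Cmp_def mons_deg_def by auto
      have "a m \<le> mdeg (Suc m) a" by (rule le_mdeg) simp
      then have a0: "a m = 0" using am by simp
      then have "a \<in> mons_deg m 0" using mons_deg_p[of m 0] a unfolding Cmp_def by blast
      moreover have "a(m := 0) = a" using a0 by (simp add: fun_upd_idem)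
      ultimately show "a \<in> Cmp m (Lex m g) 0" using a LR_iff[OF am(1)] unfolding Cmp_def by simp
    qed
  next
    show "Cmp m (Lex m g) 0 \<subseteq> Cmp (Suc m) (gen_ideal (Suc m) (Lex m g)) 0"
    proof
      fix a assume a: "a \<in> Cmp m (Lex m g) 0"
      then have a1: "a \<in> mons_deg (Suc m) 0" "a m = 0" using mons_deg_p[of m 0] unfolding Cmp_def by blast+
      then have "a(m := 0) = a" by (simp add: fun_upd_idem)
      then show "a \<in> Cmp (Suc m) (gen_ideal (Suc m) (Lex m g)) 0"
        using a a1 LR_iff[of a m g] unfolding Cmp_def mons_deg_def by simp
    qed
  qed
  then show ?thesis unfolding hilb_Cmp by simp
qed

lemma hilb_LR_Suc:
  "hilb (Suc m) (gen_ideal (Suc m) (Lex m g)) (Suc d) =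
     hilb m (Lex m g) (Suc d) + hilb (Suc m) (gen_ideal (Suc m) (Lex m g)) d"
proof -
  let ?LR = "gen_ideal (Suc m) (Lex m g)"
  let ?up = "\<lambda>a. a(m := Suc (a m))"
  have m1: "m < Suc m" by simp
  have eq: "Cmp (Suc m) ?LR (Suc d) = Cmp m (Lex m g) (Suc d) \<union> ?up ` Cmp (Suc m) ?LR d"
  proof
    show "Cmp (Suc m) ?LR (Suc d) \<subseteq> Cmp m (Lex m g) (Suc d) \<union> ?up ` Cmp (Suc m) ?LR d"
    proof
      fix a assume a: "a \<in> Cmp (Suc m) ?LR (Suc d)"
      then have am: "a \<in> mons (Suc m)" "mdeg (Suc m) a = Suc d" "a \<notin> ?LR"
        unfolding Cmp_def mons_deg_def by auto
      have tl: "a(m := 0) \<notin> Lex m g" using am LR_iff by blast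
      show "a \<in> Cmp m (Lex m g) (Suc d) \<union> ?up ` Cmp (Suc m) ?LR d"
      proof (cases "a m = 0")
        case True
        then have "a \<in> mons_deg m (Suc d)" using mons_deg_p[of m "Suc d"] a unfolding Cmp_def by blast
        moreover have "a(m := 0) = a" using True by (simp add: fun_upd_idem)
        ultimately show ?thesis using tl unfolding Cmp_def by simp
      next
        case False
        let ?c = "a(m := a m - 1)"
        have cm: "?c \<in> mons (Suc m)" using mons_upd[OF am(1) m1] .
        have cd: "mdeg (Suc m) ?c = d" using mdeg_dec[of m "Suc m" a, OF m1] False am(2) by simp
        have "?c(m := 0) = a(m := 0)" by simp
        then have "?c \<notin> ?LR" using LR_iff[OF cm] tl by simp
        then have cC: "?c \<in> Cmp (Suc m) ?LR d" unfolding Cmp_def mons_deg_def using cm cd by simp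
        have ua: "?up ?c = a"
        proof
          fix j show "?up ?c j = a j" using False by (cases "j = m") simp_all
        qed
        have "?up ?c \<in> ?up ` Cmp (Suc m) ?LR d" using cC by (rule imageI)
        then show ?thesis using ua by simp
      qed
    qed
  next
    show "Cmp m (Lex m g) (Suc d) \<union> ?up ` Cmp (Suc m) ?LR d \<subseteq> Cmp (Suc m) ?LR (Suc d)"
    proof
      fix a assume "a \<in> Cmp m (Lex m g) (Suc d) \<union> ?up ` Cmp (Suc m) ?LR d"
      then show "a \<in> Cmp (Suc m) ?LR (Suc d)"
      proof
        assume a: "a \<in> Cmp m (Lex m g) (Suc d)"
        then have a1: "a \<in> mons_deg (Suc m) (Suc d)" "a m = 0" using mons_deg_p[of m "Suc d"] unfolding Cmp_def by blast+
        then have "a(m := 0) = a" by (simp add: fun_upd_idem)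
        then show ?thesis using a a1 LR_iff[of a m g] unfolding Cmp_def mons_deg_def by simp
      next
        assume "a \<in> ?up ` Cmp (Suc m) ?LR d"
        then obtain c where c: "c \<in> Cmp (Suc m) ?LR d" "a = ?up c" by blast
        have cm: "c \<in> mons (Suc m)" "mdeg (Suc m) c = d" "c \<notin> ?LR" using c(1) unfolding Cmp_def mons_deg_def by auto
        have am: "a \<in> mons (Suc m)" using mons_upd[OF cm(1) m1] c(2) by simp
        have ad: "mdeg (Suc m) a = Suc d" using mdeg_inc[OF m1, of c] c(2) cm(2) by simp
        have "a(m := 0) = c(m := 0)" using c(2) by simp
        then have "a \<notin> ?LR" using LR_iff[OF am] LR_iff[OF cm(1)] cm(3) by simp
        then show ?thesis using am ad unfolding Cmp_def mons_deg_def by simp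
      qed
    qed
  qed
  have disj: "Cmp m (Lex m g) (Suc d) \<inter> ?up ` Cmp (Suc m) ?LR d = {}"
  proof -
    { fix a assume a1: "a \<in> Cmp m (Lex m g) (Suc d)" and a2: "a \<in> ?up ` Cmp (Suc m) ?LR d"
      have "a m = 0" using a1 mons_deg_p[of m "Suc d"] unfolding Cmp_def by blast
      moreover have "0 < a m" using a2 by auto
      ultimately have False by simp }
    then show ?thesis by blast
  qed
  have f1: "finite (Cmp m (Lex m g) (Suc d))" unfolding Cmp_def using finite_mons_deg by simp
  have f2: "finite (Cmp (Suc m) ?LR d)" unfolding Cmp_def using finite_mons_deg by simp
  have "card (Cmp (Suc m) ?LR (Suc d)) = card (Cmp m (Lex m g) (Suc d)) + card (?up ` Cmp (Suc m) ?LR d)"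
    unfolding eq by (rule card_Un_disjoint[OF f1 _ disj]) (use f2 in simp)
  also have "card (?up ` Cmp (Suc m) ?LR d) = card (Cmp (Suc m) ?LR d)" by (rule card_image[OF up_inj])
  finally show ?thesis unfolding hilb_Cmp .
qed

lemma LR_iii:
  assumes gz: "\<And>e. k < e \<Longrightarrow> g e = 0" and a: "a \<in> mons (Suc m)" and deg: "k < mdeg (Suc m) a"
  shows "a \<notin> gen_ideal (Suc m) (Lex m g) \<longleftrightarrow> 0 < a m \<and> a(m := a m - 1) \<notin> gen_ideal (Suc m) (Lex m g)"
proof -
  have m1: "m < Suc m" by simp
  have cm: "a(m := a m - 1) \<in> mons (Suc m)" using mons_upd[OF a m1] .
  have tt: "(a(m := a m - 1))(m := 0) = a(m := 0)" by simp
  show ?thesis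
  proof
    assume na: "a \<notin> gen_ideal (Suc m) (Lex m g)"
    then have tl: "a(m := 0) \<notin> Lex m g" using LR_iff[OF a] by simp
    have "mdeg m (a(m := 0)) \<le> k"
    proof (rule ccontr)
      assume "\<not> ?thesis"
      then have "g (mdeg m (a(m := 0))) = 0" using gz by simp
      then have "a(m := 0) \<in> Lex m g" using Lex_big tr_mons[OF a] unfolding mons_deg_def by blast
      then show False using tl by simp
    qed
    then have "0 < a m" using mdeg_tr[of m a] deg by simp
    moreover have "a(m := a m - 1) \<notin> gen_ideal (Suc m) (Lex m g)" using LR_iff[OF cm] tt tl by simp
    ultimately show "0 < a m \<and> a(m := a m - 1) \<notin> gen_ideal (Suc m) (Lex m g)" by simp
  next
    assume "0 < a m \<and> a(m := a m - 1) \<notin> gen_ideal (Suc m) (Lex m g)"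
    then have "a(m := 0) \<notin> Lex m g" using LR_iff[OF cm] tt by simp
    then show "a \<notin> gen_ideal (Suc m) (Lex m g)" using LR_iff[OF a] by simp
  qed
qed

lemma LR_ss: "strongly_stable (Suc m) (gen_ideal (Suc m) (Lex m g))"
  unfolding strongly_stable_def
proof (intro ballI allI impI)
  fix a j i assume a: "a \<in> gen_ideal (Suc m) (Lex m g)" and j: "j < Suc m" and aj: "0 < a j" and ij: "i < j"
  let ?a' = "(a(j := a j - 1))(i := a i + 1)"
  have am: "a \<in> mons (Suc m)" using a gen_ideal_sub by blast
  have im: "i < Suc m" using ij j by simp
  have a'm: "?a' \<in> mons (Suc m)" using mons_upd[OF mons_upd[OF am j] im] .
  have tl: "a(m := 0) \<in> Lex m g" using LR_iff[OF am] a by simp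
  have "?a'(m := 0) \<in> Lex m g"
  proof (cases "j = m")
    case True
    have "mdvd (a(m := 0)) (?a'(m := 0))" unfolding mdvd_def using True ij by auto
    moreover have "?a'(m := 0) \<in> mons m" using tr_mons[OF a'm] .
    ultimately show ?thesis using mi_up[OF Lex_mi tl] by blast
  next
    case False
    then have jm: "j < m" using j by simp
    have "((a(m := 0))(j := (a(m := 0)) j - 1))(i := (a(m := 0)) i + 1) \<in> Lex m g"
      using Lex_move[OF tl _ ij] aj False by simp
    moreover have "((a(m := 0))(j := (a(m := 0)) j - 1))(i := (a(m := 0)) i + 1) = ?a'(m := 0)"
      using False ij jm by (auto simp: fun_eq_iff)
    ultimately show ?thesis by simp
  qed
  then show "?a' \<in> gen_ideal (Suc m) (Lex m g)" using LR_iff[OF a'm] by simp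
qed


section \<open>Revlex\<close>

lemma revlex_irr: "\<not> revlex_gt n a a" unfolding revlex_gt_def by auto

lemma revlex_trans:
  assumes "revlex_gt n a b" "revlex_gt n b c" "mdeg n a = mdeg n b" "mdeg n b = mdeg n c"
  shows "revlex_gt n a c"
proof -
  obtain i where i: "i < n" "\<forall>j. i < j \<and> j < n \<longrightarrow> a j = b j" "a i < b i"
    using assms(1,3) unfolding revlex_gt_def by auto
  obtain l where l: "l < n" "\<forall>j. l < j \<and> j < n \<longrightarrow> b j = c j" "b l < c l"
    using assms(2,4) unfolding revlex_gt_def by auto
  show ?thesis unfolding revlex_gt_def
  proof (rule disjI2, intro conjI)
    show "mdeg n a = mdeg n c" using assms by simp
    show "\<exists>i<n. (\<forall>j. i < j \<and> j < n \<longrightarrow> a j = c j) \<and> a i < c i"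
    proof (cases "l \<le> i")
      case True
      have "\<forall>j. i < j \<and> j < n \<longrightarrow> a j = c j" using i l True by simp
      moreover have "a i < c i" using i l True by (cases "l = i") auto
      ultimately show ?thesis using i(1) by blast
    next
      case False
      have "\<forall>j. l < j \<and> j < n \<longrightarrow> a j = c j" using i l False by simp
      moreover have "a l < c l" using i l False by simp
      ultimately show ?thesis using l(1) by blast
    qed
  qed
qed

lemma revlex_total:
  assumes a: "a \<in> mons_deg n e" and b: "b \<in> mons_deg n e" and ne: "a \<noteq> b"
  shows "revlex_gt n a b \<or> revlex_gt n b a"
proof -
  define S where "S = {i. i < n \<and> a i \<noteq> b i}"
  have fS: "finite S" unfolding S_def by simp
  obtain j where j: "a j \<noteq> b j" using ne by auto
  have "j < n"
  proof (rule ccontr)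
    assume "\<not> j < n"
    then have "a j = 0" "b j = 0" using a b unfolding mons_deg_def mons_def by auto
    then show False using j by simp
  qed
  then have jS: "j \<in> S" unfolding S_def using j by simp
  define i where "i = Max S"
  have iS: "i \<in> S" unfolding i_def using fS jS by (intro Max_in) auto
  have above: "\<forall>l. i < l \<and> l < n \<longrightarrow> a l = b l"
  proof (intro allI impI)
    fix l assume l: "i < l \<and> l < n"
    have "l \<notin> S"
    proof
      assume "l \<in> S" then have "l \<le> i" unfolding i_def using fS by simp
      then show False using l by simp
    qed
    then show "a l = b l" unfolding S_def using l by simp
  qed
  have in': "i < n" "a i \<noteq> b i" using iS unfolding S_def by auto
  have dd: "mdeg n a = mdeg n b" using a b unfolding mons_deg_def by simp
  show ?thesis
  proof (cases "a i < b i")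
    case True
    have "\<exists>i'<n. (\<forall>l. i' < l \<and> l < n \<longrightarrow> a l = b l) \<and> a i' < b i'"
      using in'(1) above True by blast
    then have "revlex_gt n a b" unfolding revlex_gt_def using dd by blast
    then show ?thesis by (rule disjI1)
  next
    case False
    then have lt: "b i < a i" using in' by simp
    have ab: "\<forall>l. i < l \<and> l < n \<longrightarrow> b l = a l" using above by simp
    have "\<exists>i'<n. (\<forall>l. i' < l \<and> l < n \<longrightarrow> b l = a l) \<and> b i' < a i'"
      using in'(1) ab lt by blast
    then have "revlex_gt n b a" unfolding revlex_gt_def using dd by simp
    then show ?thesis by (rule disjI2)
  qed
qed

lemma slin_revlex: assumes X: "X \<subseteq> mons_deg n e" shows "slin (revlex_gt n) X"
  unfolding slin_def
proof (intro conjI ballI impI)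
  show "finite X" using X finite_sub_mons by blast
next
  fix a assume "a \<in> X" show "\<not> revlex_gt n a a" by (rule revlex_irr)
next
  fix a b c assume abc: "a \<in> X" "b \<in> X" "c \<in> X" and r: "revlex_gt n a b" "revlex_gt n b c"
  have "mdeg n a = e" "mdeg n b = e" "mdeg n c = e" using abc X unfolding mons_deg_def by auto
  then show "revlex_gt n a c" using revlex_trans[OF r] by simp
next
  fix a b assume ab: "a \<in> X" "b \<in> X" "a \<noteq> b"
  then show "revlex_gt n a b \<or> revlex_gt n b a" using revlex_total[of a n e b] X by blast
qed

lemma revlex_move:
  assumes g: "g \<in> mons n" and j: "j < n" and gj: "0 < g j" and ij: "i < j"
  shows "revlex_gt n ((g(j := g j - 1))(i := g i + 1)) g"
proof -
  let ?g' = "(g(j := g j - 1))(i := g i + 1)"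
  have in': "i < n" using ij j by simp
  have d1: "Suc (mdeg n (g(j := g j - 1))) = mdeg n g" using mdeg_dec[of j n g, OF j gj] .
  have d2: "mdeg n ?g' = Suc (mdeg n (g(j := g j - 1)))"
    using mdeg_inc[OF in', of "g(j := g j - 1)"] ij by simp
  have "\<forall>l. j < l \<and> l < n \<longrightarrow> ?g' l = g l" using ij by auto
  moreover have "?g' j < g j" using ij gj by simp
  ultimately show ?thesis unfolding revlex_gt_def using d1 d2 j by auto
qed

definition Inv :: "nat \<Rightarrow> (nat \<Rightarrow> nat) \<Rightarrow> nat \<Rightarrow> (nat \<Rightarrow> nat) set \<Rightarrow> nat \<Rightarrow> bool" where
  "Inv m h k I D \<longleftrightarrow> monomial_ideal (Suc m) I \<and> (\<forall>d\<le>D. hilb (Suc m) I d = h d) \<and>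
     (\<forall>a\<in>mons (Suc m). D < mdeg (Suc m) a \<longrightarrow> (a \<notin> I \<longleftrightarrow> 0 < a m \<and> a(m := a m - 1) \<notin> I)) \<and>
     strongly_stable (Suc m) I \<and> k \<le> D"

lemma Inv_shift:
  assumes inv: "Inv m h k I D" and dD: "D \<le> d"
  shows "hilb (Suc m) I (Suc d) = hilb (Suc m) I d"
proof -
  let ?up = "\<lambda>a. a(m := Suc (a m))"
  have iii: "\<forall>a\<in>mons (Suc m). D < mdeg (Suc m) a \<longrightarrow> (a \<notin> I \<longleftrightarrow> 0 < a m \<and> a(m := a m - 1) \<notin> I)"
    using inv unfolding Inv_def by blast
  have m1: "m < Suc m" by simp
  have "Cmp (Suc m) I (Suc d) = ?up ` Cmp (Suc m) I d"
  proof
    show "Cmp (Suc m) I (Suc d) \<subseteq> ?up ` Cmp (Suc m) I d"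
    proof
      fix a assume a: "a \<in> Cmp (Suc m) I (Suc d)"
      then have am: "a \<in> mons (Suc m)" "mdeg (Suc m) a = Suc d" "a \<notin> I" unfolding Cmp_def mons_deg_def by auto
      then have c: "0 < a m" "a(m := a m - 1) \<notin> I" using iii dD by auto
      let ?c = "a(m := a m - 1)"
      have cm: "?c \<in> mons_deg (Suc m) d" using mons_upd[OF am(1) m1] mdeg_dec[of m "Suc m" a, OF m1 c(1)] am(2)
        unfolding mons_deg_def by simp
      have ua: "?up ?c = a"
      proof
        fix j show "?up ?c j = a j" using c(1) by (cases "j = m") simp_all
      qed
      have "?c \<in> Cmp (Suc m) I d" unfolding Cmp_def using cm c(2) by simp
      then have "?up ?c \<in> ?up ` Cmp (Suc m) I d" by (rule imageI)
      then show "a \<in> ?up ` Cmp (Suc m) I d" using ua by simp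
    qed
  next
    show "?up ` Cmp (Suc m) I d \<subseteq> Cmp (Suc m) I (Suc d)"
    proof
      fix a assume "a \<in> ?up ` Cmp (Suc m) I d"
      then obtain c where c: "c \<in> Cmp (Suc m) I d" "a = ?up c" by blast
      have cm: "c \<in> mons (Suc m)" "mdeg (Suc m) c = d" "c \<notin> I" using c(1) unfolding Cmp_def mons_deg_def by auto
      have am: "a \<in> mons (Suc m)" using mons_upd[OF cm(1) m1] c(2) by simp
      have ad: "mdeg (Suc m) a = Suc d" using mdeg_inc[OF m1, of c] c(2) cm(2) by simp
      have "a(m := a m - 1) = c" using c(2) by simp
      then have "a \<notin> I" using iii am ad dD cm(3) c(2) by auto
      then show "a \<in> Cmp (Suc m) I (Suc d)" unfolding Cmp_def mons_deg_def using am ad by simp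
    qed
  qed
  then have "card (Cmp (Suc m) I (Suc d)) = card (Cmp (Suc m) I d)"
    using card_image[OF up_inj] by metis
  then show ?thesis unfolding hilb_Cmp .
qed

lemma Inv_const:
  assumes inv: "Inv m h k I D" shows "D \<le> d \<Longrightarrow> hilb (Suc m) I d = h D"
proof (induction d)
  case 0 then show ?case using inv unfolding Inv_def by simp
next
  case (Suc d)
  show ?case
  proof (cases "D \<le> d")
    case True then show ?thesis using Inv_shift[OF inv True] Suc.IH by simp
  next
    case False then have "D = Suc d" using Suc.prems by simp
    then show ?thesis using inv unfolding Inv_def by simp
  qed
qed

lemma Inv_final:
  assumes inv: "Inv m h k I D" and z: "\<And>d. D < d \<Longrightarrow> h d = 0" and hD: "h D = 0"
  shows "\<forall>d. hilb (Suc m) I d = h d"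
proof
  fix d show "hilb (Suc m) I d = h d"
  proof (cases "d \<le> D")
    case True then show ?thesis using inv unfolding Inv_def by simp
  next
    case False then show ?thesis using Inv_const[OF inv, of d] z hD by simp
  qed
qed


lemma Inv_step:
  assumes H2: "\<And>d. k \<le> d \<Longrightarrow> h (Suc d) \<le> h d"
    and inv: "Inv m h k I D" and nf: "\<not> (\<forall>d. hilb (Suc m) I d = h d)"
  shows "\<exists>D'>D. Inv m h k (W1_step (Suc m) h I) D'"
proof -
  let ?N = "Suc m"
  have m1: "m < ?N" by simp
  have mi: "monomial_ideal ?N I" and hD: "\<forall>d\<le>D. hilb ?N I d = h d"
    and iii: "\<forall>a\<in>mons ?N. D < mdeg ?N a \<longrightarrow> (a \<notin> I \<longleftrightarrow> 0 < a m \<and> a(m := a m - 1) \<notin> I)"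
    and ss: "strongly_stable ?N I" and kD: "k \<le> D" using inv unfolding Inv_def by auto
  define d0 where "d0 = (LEAST d. hilb ?N I d \<noteq> h d)"
  have ex: "\<exists>d. hilb ?N I d \<noteq> h d" using nf by simp
  have hd0: "hilb ?N I d0 \<noteq> h d0" unfolding d0_def by (rule LeastI_ex[OF ex])
  have bel: "\<And>d. d < d0 \<Longrightarrow> hilb ?N I d = h d" unfolding d0_def using not_less_Least by blast
  have Dd0: "D < d0"
  proof (rule ccontr)
    assume "\<not> D < d0" then have "d0 \<le> D" by simp
    then show False using hD hd0 by simp
  qed
  define r where "r = hilb ?N I d0 - h d0"
  define C where "C = {a \<in> mons_deg ?N d0. a \<notin> I}"
  define new where "new = {a \<in> C. card {b \<in> C. revlex_gt ?N b a} < r}"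
  have step: "W1_step ?N h I = gen_ideal ?N (I \<union> new)"
    unfolding W1_step_def if_not_P[OF nf] Let_def new_def C_def r_def d0_def ..
  define I' where "I' = gen_ideal ?N (I \<union> new)"
  have d0pos: "d0 = Suc (d0 - 1)" using Dd0 by simp
  have hprev: "hilb ?N I d0 = h (d0 - 1)"
  proof -
    have "hilb ?N I (Suc (d0 - 1)) = hilb ?N I (d0 - 1)" using Inv_shift[OF inv, of "d0 - 1"] Dd0 by simp
    moreover have "hilb ?N I (d0 - 1) = h (d0 - 1)" using bel Dd0 by simp
    ultimately show ?thesis using d0pos by simp
  qed
  have hle: "h d0 \<le> h (d0 - 1)" using H2[of "d0 - 1"] kD Dd0 d0pos by simp
  have Csub: "C \<subseteq> mons_deg ?N d0" unfolding C_def by auto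
  have cC: "card C = hilb ?N I d0" unfolding C_def hilb_def ..
  have slC: "slin (revlex_gt ?N) C" by (rule slin_revlex[OF Csub])
  have new_top: "new = {a \<in> C. rnk (revlex_gt ?N) C a < r}" unfolding new_def rnk_def ..
  have cnew: "card new = r" unfolding new_top card_top[OF slC] r_def cC by simp
  have newC: "new \<subseteq> C" unfolding new_def by auto
  have new_up: "\<And>a b. a \<in> new \<Longrightarrow> b \<in> C \<Longrightarrow> revlex_gt ?N b a \<Longrightarrow> b \<in> new"
    unfolding new_top using top_upclosed[OF slC] by blast
  have Isub: "I \<subseteq> mons ?N" using mi unfolding monomial_ideal_def by blast
  have memI': "\<And>x. x \<in> I' \<longleftrightarrow> x \<in> mons ?N \<and> (x \<in> I \<or> (\<exists>g\<in>new. mdvd g x))"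
  proof -
    fix x
    show "x \<in> I' \<longleftrightarrow> x \<in> mons ?N \<and> (x \<in> I \<or> (\<exists>g\<in>new. mdvd g x))"
    proof
      assume "x \<in> I'"
      then obtain a where a: "x \<in> mons ?N" "a \<in> I \<union> new" "mdvd a x" unfolding I'_def gen_ideal_def by blast
      show "x \<in> mons ?N \<and> (x \<in> I \<or> (\<exists>g\<in>new. mdvd g x))"
      proof (cases "a \<in> I")
        case True then show ?thesis using mi_up[OF mi True a(1) a(3)] a(1) by simp
      next
        case False then show ?thesis using a by blast
      qed
    next
      assume x: "x \<in> mons ?N \<and> (x \<in> I \<or> (\<exists>g\<in>new. mdvd g x))"
      then show "x \<in> I'" unfolding I'_def gen_ideal_def using mdvd_refl by blast
    qed
  qed
  have II': "I \<subseteq> I'" using memI' Isub by blast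
  have mi': "monomial_ideal ?N I'" unfolding I'_def by (rule gen_ideal_mi)
  have newdeg: "\<And>g. g \<in> new \<Longrightarrow> g \<in> mons ?N \<and> mdeg ?N g = d0 \<and> g \<notin> I"
    using newC unfolding C_def mons_deg_def by blast
  have lowdeg: "\<And>x e. x \<in> mons_deg ?N e \<Longrightarrow> e < d0 \<Longrightarrow> (x \<in> I' \<longleftrightarrow> x \<in> I)"
  proof -
    fix x e assume x: "x \<in> mons_deg ?N e" and e: "e < d0"
    have "\<not> (\<exists>g\<in>new. mdvd g x)"
    proof
      assume "\<exists>g\<in>new. mdvd g x"
      then obtain g where g: "g \<in> new" "mdvd g x" by blast
      have "mdeg ?N g \<le> mdeg ?N x" using mdvd_mdeg[OF g(2)] .
      then show False using newdeg[OF g(1)] x e unfolding mons_deg_def by simp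
    qed
    then show "x \<in> I' \<longleftrightarrow> x \<in> I" using memI' x unfolding mons_deg_def by blast
  qed
  have eqdeg: "\<And>x. x \<in> mons_deg ?N d0 \<Longrightarrow> (x \<in> I' \<longleftrightarrow> x \<in> I \<or> x \<in> new)"
  proof -
    fix x assume x: "x \<in> mons_deg ?N d0"
    have "(\<exists>g\<in>new. mdvd g x) \<longleftrightarrow> x \<in> new"
    proof
      assume "\<exists>g\<in>new. mdvd g x"
      then obtain g where g: "g \<in> new" "mdvd g x" by blast
      have gg: "g \<in> mons ?N" "mdeg ?N g = d0" using newdeg[OF g(1)] by auto
      have xx: "x \<in> mons ?N" "mdeg ?N x = d0" using x unfolding mons_deg_def by auto
      have "g = x" using mdvd_eq[OF g(2) gg(1) xx(1)] gg(2) xx(2) by simp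
      then show "x \<in> new" using g by simp
    next
      assume "x \<in> new" then show "\<exists>g\<in>new. mdvd g x" using mdvd_refl by blast
    qed
    then show "x \<in> I' \<longleftrightarrow> x \<in> I \<or> x \<in> new" using memI' x unfolding mons_deg_def by blast
  qed
  have hilb': "\<forall>d\<le>d0. hilb ?N I' d = h d"
  proof (intro allI impI)
    fix d assume dd: "d \<le> d0"
    show "hilb ?N I' d = h d"
    proof (cases "d < d0")
      case True
      have "Cmp ?N I' d = Cmp ?N I d" unfolding Cmp_def using lowdeg True by blast
      then show ?thesis using bel[OF True] unfolding hilb_Cmp by simp
    next
      case False
      then have dd0: "d = d0" using dd by simp
      have "Cmp ?N I' d0 = C - new" unfolding Cmp_def C_def using eqdeg newC unfolding C_def by blast
      moreover have "card (C - new) = card C - card new"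
        by (rule card_Diff_subset[OF finite_subset[OF newC finite_sub_mons[OF Csub]] newC])
      ultimately have "hilb ?N I' d0 = card C - r" unfolding hilb_Cmp cnew by simp
      then show ?thesis using cC r_def hprev hle dd0 by simp
    qed
  qed
  have iii': "\<forall>x\<in>mons ?N. d0 < mdeg ?N x \<longrightarrow> (x \<notin> I' \<longleftrightarrow> 0 < x m \<and> x(m := x m - 1) \<notin> I')"
  proof (intro ballI impI)
    fix x assume xm: "x \<in> mons ?N" and xd: "d0 < mdeg ?N x"
    let ?c = "x(m := x m - 1)"
    have cm: "?c \<in> mons ?N" using mons_upd[OF xm m1] .
    have cx: "mdvd ?c x" unfolding mdvd_def by simp
    have iiix: "x \<notin> I \<longleftrightarrow> 0 < x m \<and> ?c \<notin> I" using iii xm xd Dd0 by simp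
    show "x \<notin> I' \<longleftrightarrow> 0 < x m \<and> ?c \<notin> I'"
    proof
      assume nx: "x \<notin> I'"
      then have "x \<notin> I" using II' by blast
      then have 1: "0 < x m" using iiix by simp
      have "?c \<notin> I'"
      proof
        assume "?c \<in> I'" then have "x \<in> I'" using mi_up[OF mi' _ xm cx] by simp
        then show False using nx by simp
      qed
      then show "0 < x m \<and> ?c \<notin> I'" using 1 by simp
    next
      assume a: "0 < x m \<and> ?c \<notin> I'"
      then have xm0: "0 < x m" and cn: "?c \<notin> I'" by auto
      show "x \<notin> I'"
      proof
        assume "x \<in> I'"
        then have "x \<in> I \<or> (\<exists>g\<in>new. mdvd g x)" using memI' by simp
        then show False
        proof
          assume "x \<in> I"
          then have "?c \<in> I" using iiix xm0 by simp
          then show False using cn II' by blast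
        next
          assume "\<exists>g\<in>new. mdvd g x"
          then obtain g where g: "g \<in> new" "mdvd g x" by blast
          have gI: "g \<in> mons ?N" "mdeg ?N g = d0" "g \<notin> I" using newdeg[OF g(1)] by auto
          show False
          proof (cases "mdvd g ?c")
            case True then have "?c \<in> I'" using memI' cm g(1) by blast
            then show False using cn by simp
          next
            case False
            then obtain t where t: "?c t < g t" unfolding mdvd_def by (auto simp: not_le)
            have "t = m"
            proof (rule ccontr)
              assume "t \<noteq> m" then have e1: "?c t = x t" by simp
              have "g t \<le> x t" using g(2) unfolding mdvd_def by blast
              then show False using t e1 by simp
            qed
            then have l1: "x m - 1 < g m" using t by simp
            have l2: "g m \<le> x m" using g(2) unfolding mdvd_def by blast
            have gm: "g m = x m" using l1 l2 xm0 by arith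
            have gmpos: "0 < g m" using gm xm0 by simp
            let ?u = "g(m := g m - 1)"
            have uI: "?u \<notin> I" using iii gI Dd0 by simp
            have uc: "mdvd ?u ?c" unfolding mdvd_def
            proof
              fix j show "?u j \<le> ?c j" using g(2) gm unfolding mdvd_def by (cases "j = m") auto
            qed
            have du: "Suc (mdeg ?N ?u) = d0" using mdeg_dec[of m ?N g, OF m1 gmpos] gI(2) by simp
            have dc: "Suc (mdeg ?N ?c) = mdeg ?N x" using mdeg_dec[of m ?N x, OF m1 xm0] by simp
            have "\<exists>t'. ?u t' < ?c t'"
            proof (rule ccontr)
              assume "\<not> ?thesis"
              then have "mdvd ?c ?u" unfolding mdvd_def by (simp add: not_less)
              then have "mdeg ?N ?c \<le> mdeg ?N ?u" by (rule mdvd_mdeg)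
              then show False using du dc xd by simp
            qed
            then obtain t' where t': "?u t' < ?c t'" by blast
            have t'm: "t' \<noteq> m" using t' gm by (cases "t' = m") auto
            have t'N: "t' < ?N" using mons_nz[OF cm] t' by simp
            then have t'lt: "t' < m" using t'm by simp
            let ?g' = "(g(m := g m - 1))(t' := g t' + 1)"
            have g'c: "mdvd ?g' ?c" unfolding mdvd_def
            proof
              fix j show "?g' j \<le> ?c j"
                using uc t' t'm unfolding mdvd_def by (cases "j = t'") (auto simp: Suc_le_eq)
            qed
            have g'm: "?g' \<in> mons ?N" using mons_upd[OF mons_upd[OF gI(1) m1] t'N] .
            have g'd: "mdeg ?N ?g' = d0" using mdeg_inc[OF t'N, of ?u] du t'm by simp
            have g'I: "?g' \<notin> I"
            proof
              assume "?g' \<in> I"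
              then have "?c \<in> I" using mi_up[OF mi _ cm g'c] by simp
              then show False using cn II' by blast
            qed
            then have g'C: "?g' \<in> C" unfolding C_def mons_deg_def using g'm g'd by simp
            have "revlex_gt ?N ?g' g" using revlex_move[OF gI(1) m1 gmpos t'lt] .
            then have "?g' \<in> new" using new_up[OF g(1) g'C] by simp
            then have "?c \<in> I'" using memI' cm g'c by blast
            then show False using cn by simp
          qed
        qed
      qed
    qed
  qed
  have ss': "strongly_stable ?N I'"
    unfolding strongly_stable_def
  proof (intro ballI allI impI)
    fix x j i assume x: "x \<in> I'" and j: "j < ?N" and xj: "0 < x j" and ij: "i < j"
    let ?x' = "(x(j := x j - 1))(i := x i + 1)"
    have xm: "x \<in> mons ?N" using memI' x by simp
    have iN: "i < ?N" using ij j by simp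
    have x'm: "?x' \<in> mons ?N" using mons_upd[OF mons_upd[OF xm j] iN] .
    have "x \<in> I \<or> (\<exists>g\<in>new. mdvd g x)" using memI' x by simp
    then show "?x' \<in> I'"
    proof
      assume "x \<in> I"
      then have "?x' \<in> I" using ss j xj ij unfolding strongly_stable_def by blast
      then show ?thesis using II' by blast
    next
      assume "\<exists>g\<in>new. mdvd g x"
      then obtain g where g: "g \<in> new" "mdvd g x" by blast
      have gI: "g \<in> mons ?N" "mdeg ?N g = d0" "g \<notin> I" using newdeg[OF g(1)] by auto
      show ?thesis
      proof (cases "g j < x j")
        case True
        have "mdvd g ?x'" unfolding mdvd_def
        proof
          fix l show "g l \<le> ?x' l" using g(2) True ij unfolding mdvd_def
            by (cases "l = i"; cases "l = j") (auto simp: le_SucI)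
        qed
        then show ?thesis using memI' x'm g(1) by blast
      next
        case False
        then have gj: "g j = x j" using g(2) unfolding mdvd_def by (simp add: le_antisym not_less)
        then have gjpos: "0 < g j" using xj by simp
        let ?g' = "(g(j := g j - 1))(i := g i + 1)"
        have g'x: "mdvd ?g' ?x'" unfolding mdvd_def
        proof
          fix l show "?g' l \<le> ?x' l" using g(2) gj ij unfolding mdvd_def by (cases "l = i"; cases "l = j") auto
        qed
        have g'm: "?g' \<in> mons ?N" using mons_upd[OF mons_upd[OF gI(1) j] iN] .
        have g'd: "mdeg ?N ?g' = d0"
          using mdeg_inc[OF iN, of "g(j := g j - 1)"] mdeg_dec[of j ?N g, OF j gjpos] gI(2) ij by simp
        show ?thesis
        proof (cases "?g' \<in> I")
          case True
          then have "?x' \<in> I" using mi_up[OF mi _ x'm g'x] by simp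
          then show ?thesis using II' by blast
        next
          case False
          then have g'C: "?g' \<in> C" unfolding C_def mons_deg_def using g'm g'd by simp
          have "revlex_gt ?N ?g' g" using revlex_move[OF gI(1) j gjpos ij] .
          then have "?g' \<in> new" using new_up[OF g(1) g'C] by simp
          then show ?thesis using memI' x'm g'x by blast
        qed
      qed
    qed
  qed
  have "Inv m h k I' d0" unfolding Inv_def using mi' hilb' iii' ss' kD Dd0 by simp
  then have "Inv m h k (W1_step ?N h I) d0" using step unfolding I'_def by simp
  then show ?thesis using Dd0 by blast
qed


lemma O_zero:
  assumes O: "O_sequence h" and h1: "h 1 = 0" and d: "0 < d" shows "h d = 0"
proof -
  obtain n' J where J: "monomial_ideal n' J" and hJ: "\<forall>d. h d = hilb n' J d"
    using O unfolding O_sequence_def by blast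
  have "card {a \<in> mons_deg n' 1. a \<notin> J} = 0" using hJ h1 unfolding hilb_def by simp
  then have e1: "{a \<in> mons_deg n' 1. a \<notin> J} = {}" using finite_mons_deg by simp
  have evJ: "\<And>i. i < n' \<Longrightarrow> ev i \<in> J" using e1 ev_mons by blast
  have "{a \<in> mons_deg n' d. a \<notin> J} = {}"
  proof -
    { fix a assume a: "a \<in> mons_deg n' d" "a \<notin> J"
      then have am: "a \<in> mons n'" "mdeg n' a = d" unfolding mons_deg_def by auto
      have "\<exists>i<n'. 0 < a i"
      proof (rule ccontr)
        assume "\<not> ?thesis"
        then have "\<forall>i<n'. a i = 0" by simp
        then have "mdeg n' a = 0" unfolding mdeg_def by simp
        then show False using am d by simp
      qed
      then obtain i where i: "i < n'" "0 < a i" by blast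
      have "mdvd (ev i) a" unfolding mdvd_def ev_def using i by auto
      then have "a \<in> J" using mi_up[OF J evJ[OF i(1)] am(1)] by simp
      then have False using a by simp }
    then show ?thesis by blast
  qed
  then have "card {a \<in> mons_deg n' d. a \<notin> J} = 0" by (simp only: card.empty)
  then show ?thesis using hJ unfolding hilb_def by simp
qed

lemma mons0: "a \<in> mons 0 \<Longrightarrow> a = (\<lambda>_. 0)"
  by (rule ext) (simp add: mons_def)

lemma mons_deg0: "mons_deg 0 e = (if e = 0 then {\<lambda>_. 0} else {})"
proof -
  have A: "mons 0 = {\<lambda>_. 0}"
  proof
    show "mons 0 \<subseteq> {\<lambda>_. 0}" using mons0 by blast
    show "{\<lambda>_. 0} \<subseteq> mons 0" unfolding mons_def by simp
  qed
  have "mdeg 0 a = 0" for a unfolding mdeg_def by simp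
  then show ?thesis unfolding mons_deg_def A by auto
qed

theorem main:
  fixes h :: "nat \<Rightarrow> nat"
  assumes "weak_lefschetz_O_seq h"
  shows "(\<forall>d. hilb (h 1) (W1 h) d = h d) \<and> monomial_ideal (h 1) (W1 h)
         \<and> strongly_stable (h 1) (W1 h)"
proof -
  have O: "O_sequence h" and h0: "h 0 = 1" and OD: "O_sequence (Delta h)"
    using assms unfolding weak_lefschetz_O_seq_def finite_O_sequence_def by auto
  obtain s where s: "h s \<noteq> 0" "\<forall>d>s. h d = 0"
    using assms unfolding weak_lefschetz_O_seq_def finite_O_sequence_def by auto
  obtain k0 where k0: "\<forall>i<k0. h i < h (Suc i)" "\<forall>i\<ge>k0. h (Suc i) \<le> h i"
    using assms unfolding weak_lefschetz_O_seq_def unimodal_def by auto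
  have pk: "peak h = k0" unfolding peak_def
  proof (rule Least_equality)
    show "h (Suc k0) \<le> h k0" using k0 by simp
  next
    fix y assume hy: "h (Suc y) \<le> h y"
    show "k0 \<le> y"
    proof (rule ccontr)
      assume "\<not> k0 \<le> y"
      then have "h y < h (Suc y)" using k0(1) by simp
      then show False using hy by simp
    qed
  qed
  define k where "k = peak h"
  have H1: "\<And>d. d < k \<Longrightarrow> h d < h (Suc d)" using k0 pk k_def by simp
  have H2: "\<And>d. k \<le> d \<Longrightarrow> h (Suc d) \<le> h d" using k0 pk k_def by simp
  define g where "g = Delta h"
  have g0: "g 0 = 1" unfolding g_def Delta_def by simp
  have gS: "\<And>d. Suc d \<le> k \<Longrightarrow> g (Suc d) = h (Suc d) - h d" unfolding g_def Delta_def k_def by simp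
  have gz: "\<And>e. k < e \<Longrightarrow> g e = 0" unfolding g_def Delta_def k_def by simp
  show ?thesis
  proof (cases "h 1")
    case 0
    have hz: "\<And>d. 0 < d \<Longrightarrow> h d = 0" using O_zero[OF O] 0 by simp
    have ls: "lex_seg 0 g e = {}" for e
    proof (cases "e = 0")
      case True
      then show ?thesis unfolding lex_seg_def using g0 mons_deg0 by simp
    next
      case False then show ?thesis unfolding lex_seg_def using mons_deg0 by simp
    qed
    have Lz: "Lex 0 g = {}" unfolding Lex_def gen_ideal_def using ls by simp
    have st: "W1_start 0 h = {}" unfolding W1_start_def using Lz g_def by (simp add: gen_ideal_def)
    have hl: "\<forall>d. hilb 0 {} d = h d"
    proof
      fix d show "hilb 0 {} d = h d"
        using h0 hz[of d] unfolding hilb_def mons_deg0 by (cases "d = 0") auto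
    qed
    have "W1 h = {}" unfolding W1_def Let_def 0 st
      using hl by (simp add: Least_eq_0)
    then show ?thesis using hl 0 unfolding monomial_ideal_def strongly_stable_def by simp
  next
    case (Suc m)
    have g1: "g 1 = m"
    proof (cases "1 \<le> k")
      case True then show ?thesis using gS[of 0] Suc h0 by simp
    next
      case False
      then have "h 1 \<le> h 0" using H2[of 0] by simp
      then have "m = 0" using Suc h0 by simp
      then show ?thesis using gz False by simp
    qed
    have OD': "O_sequence g" unfolding g_def by (rule OD)
    note clos = lex_closure(1)[OF OD' g1] and gb = lex_closure(2)[OF OD' g1]
    let ?LR = "gen_ideal (Suc m) (Lex m g)"
    have stt: "W1_start (h 1) h = ?LR" unfolding W1_start_def Suc g_def by simp
    have hLR: "\<And>d. d \<le> k \<Longrightarrow> hilb (Suc m) ?LR d = h d"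
    proof -
      fix d show "d \<le> k \<Longrightarrow> hilb (Suc m) ?LR d = h d"
      proof (induction d)
        case 0 then show ?case using hilb_LR_0 hilb_Lex[OF clos gb] g0 h0 by simp
      next
        case (Suc d)
        have "hilb (Suc m) ?LR (Suc d) = g (Suc d) + h d"
          using hilb_LR_Suc hilb_Lex[OF clos gb] Suc by simp
        then show ?case using gS[OF Suc.prems] H1[of d] Suc.prems by simp
      qed
    qed
    have inv0: "Inv m h k ?LR k"
      unfolding Inv_def
    proof (intro conjI)
      show "monomial_ideal (Suc m) ?LR" by (rule gen_ideal_mi)
      show "\<forall>d\<le>k. hilb (Suc m) ?LR d = h d" using hLR by simp
      show "\<forall>a\<in>mons (Suc m). k < mdeg (Suc m) a \<longrightarrow> (a \<notin> ?LR \<longleftrightarrow> 0 < a m \<and> a(m := a m - 1) \<notin> ?LR)"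
      proof (intro ballI impI)
        fix a assume "a \<in> mons (Suc m)" "k < mdeg (Suc m) a"
        then show "(a \<notin> ?LR \<longleftrightarrow> 0 < a m \<and> a(m := a m - 1) \<notin> ?LR)"
          using LR_iii[of k g a m] gz by blast
      qed
      show "strongly_stable (Suc m) ?LR" by (rule LR_ss)
    qed simp
    define It where "It t = (W1_step (Suc m) h ^^ t) ?LR" for t
    have claim: "\<exists>D. Inv m h k (It t) D \<and> ((\<forall>d. hilb (Suc m) (It t) d = h d) \<or> k + t \<le> D)" for t
    proof (induction t)
      case 0 then show ?case using inv0 unfolding It_def by auto
    next
      case (Suc t)
      then obtain D where D: "Inv m h k (It t) D" "(\<forall>d. hilb (Suc m) (It t) d = h d) \<or> k + t \<le> D" by blast
      have ItS: "It (Suc t) = W1_step (Suc m) h (It t)" unfolding It_def by simp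
      show ?case
      proof (cases "\<forall>d. hilb (Suc m) (It t) d = h d")
        case True
        then have "It (Suc t) = It t" unfolding ItS W1_step_def by simp
        then show ?thesis using D True by auto
      next
        case False
        then obtain D' where "D < D'" "Inv m h k (It (Suc t)) D'" using Inv_step[OF H2 D(1)] ItS by auto
        then show ?thesis using D(2) False by auto
      qed
    qed
    have fin: "\<forall>d. hilb (Suc m) (It (Suc s)) d = h d"
    proof -
      obtain D where D: "Inv m h k (It (Suc s)) D" "(\<forall>d. hilb (Suc m) (It (Suc s)) d = h d) \<or> k + Suc s \<le> D"
        using claim by blast
      show ?thesis
      proof (cases "\<forall>d. hilb (Suc m) (It (Suc s)) d = h d")
        case True then show ?thesis .
      next
        case False
        then have "k + Suc s \<le> D" using D(2) by blast
        then have "s < D" by simp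
        then show ?thesis using Inv_final[OF D(1)] s(2) by simp
      qed
    qed
    define N0 where "N0 = (LEAST N. \<forall>d. hilb (Suc m) (It N) d = h d)"
    have finN0: "\<forall>d. hilb (Suc m) (It N0) d = h d" unfolding N0_def using fin by (rule LeastI)
    have W: "W1 h = It N0" unfolding W1_def Let_def stt unfolding Suc N0_def It_def ..
    obtain D where "Inv m h k (It N0) D" using claim by blast
    then have "monomial_ideal (Suc m) (It N0)" "strongly_stable (Suc m) (It N0)" unfolding Inv_def by auto
    then show ?thesis using finN0 W Suc by simp
  qed
qed


theorem lemma3p1:
  fixes h :: "nat \<Rightarrow> nat"
  assumes "weak_lefschetz_O_seq h"
  shows "(\<forall>d. hilb (h 1) (W1 h) d = h d) \<and> monomial_ideal (h 1) (W1 h)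
         \<and> strongly_stable (h 1) (W1 h)"
  using assms by (rule main)

end
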